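(* Let $x_a,x_b\in\mathbb{R}$, $U=\{x\in C^1[a,b]: x(a)=x_a,\ x(b)=x_b\}$, and for $(x,\rho)\in U\times(0,\infty)$ let $J_\rho(x,\rho)=\int_a^b L(t,x(t),{}^CD_{a+}^{\alpha,\rho}x(t))\,dt$. If $(x,\rho)$ is a (local) minimizer of $J_\rho$ on $U\times(0,\infty)$, then $$\partial_2L(t,x(t),{}^CD_{a+}^{\alpha,\rho} x(t))-D_{b-}^{\alpha,\rho}\big(\partial_3L(t,x(t),{}^CD_{a+}^{\alpha,\rho} x(t))\big)=0\quad\text{on }[a,b],$$ and $$\int_a^b \partial_3L(t,x(t),{}^CD_{a+}^{\alpha,\rho}x(t))\,\psi'(\rho)\,dt=0,$$ where, for each fixed $t$, $\psi(\rho)={}^CD_{a+}^{\alpha,\rho}x(t)$ is regarded as a function of $\rho$.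
   Context: Fix $0<a<b<\infty$ and $\alpha\in(0,1)$. For $\rho>0$ and $x\in C^1[a,b]$, ${}^CD_{a+}^{\alpha,\rho} x(t)=\frac{\rho^\alpha}{\Gamma(1-\alpha)}\, t^{1-\rho}\frac{d}{dt}\int_a^t \frac{\tau^{\rho-1}}{(t^\rho-\tau^\rho)^\alpha}[x(\tau)-x(a)]\,d\tau=\frac{\rho^\alpha}{\Gamma(1-\alpha)}\int_a^t (t^\rho-\tau^\rho)^{-\alpha}x'(\tau)\,d\tau$. For a function $f$, $D_{b-}^{\alpha,\rho} f(t)=\frac{\rho^\alpha}{\Gamma(1-\alpha)}\frac{d}{dt}\int_t^b (\tau^\rho-t^\rho)^{-\alpha}f(\tau)\,d\tau$. $\partial_i$ denotes the partial derivative with respect to the $i$-th argument. $L:[a,b]\times\mathbb{R}^2\to\mathbb{R}$ is continuously differentiable with respect to its second and third arguments, and for every $x\in C^1[a,b]$ the map $t\mapsto D_{b-}^{\alpha,\rho}(\partial_3L(t,x(t),{}^CD_{a+}^{\alpha,\rho}x(t)))$ is continuous. *)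

theory Defs
  imports "HOL-Analysis.Analysis"
begin

definition C1_on :: "real \<Rightarrow> real \<Rightarrow> (real \<Rightarrow> real) \<Rightarrow> bool" where
  "C1_on a b x \<longleftrightarrow>
     (\<exists>D. (\<forall>t\<in>{a..b}. (x has_vector_derivative D t) (at t within {a..b})) \<and> continuous_on {a..b} D)"

definition dC1 :: "real \<Rightarrow> real \<Rightarrow> (real \<Rightarrow> real) \<Rightarrow> real \<Rightarrow> real" where
  "dC1 a b x t = vector_derivative x (at t within {a..b})"

text \<open>Caputo--Katugampola derivative (second, equivalent form of the definition).\<close>
definition caputo_kat :: "real \<Rightarrow> real \<Rightarrow> real \<Rightarrow> real \<Rightarrow> (real \<Rightarrow> real) \<Rightarrow> real \<Rightarrow> real" where
  "caputo_kat a b alpha rho x t =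
     rho powr alpha / Gamma (1 - alpha) *
     integral {a..t} (\<lambda>\<tau>. (t powr rho - \<tau> powr rho) powr (- alpha) * dC1 a b x \<tau>)"

definition kat_right_int :: "real \<Rightarrow> real \<Rightarrow> real \<Rightarrow> (real \<Rightarrow> real) \<Rightarrow> real \<Rightarrow> real" where
  "kat_right_int b alpha rho f s =
     integral {s..b} (\<lambda>\<tau>. (\<tau> powr rho - s powr rho) powr (- alpha) * f \<tau>)"

definition kat_right :: "real \<Rightarrow> real \<Rightarrow> real \<Rightarrow> real \<Rightarrow> (real \<Rightarrow> real) \<Rightarrow> real \<Rightarrow> real" where
  "kat_right a b alpha rho f t =
     rho powr alpha / Gamma (1 - alpha) *
     vector_derivative (kat_right_int b alpha rho f) (at t within {a..b})"

definition partial2 :: "(real \<Rightarrow> real \<Rightarrow> real \<Rightarrow> real) \<Rightarrow> real \<Rightarrow> real \<Rightarrow> real \<Rightarrow> real" where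
  "partial2 L t y z = deriv (\<lambda>y'. L t y' z) y"

definition partial3 :: "(real \<Rightarrow> real \<Rightarrow> real \<Rightarrow> real) \<Rightarrow> real \<Rightarrow> real \<Rightarrow> real \<Rightarrow> real" where
  "partial3 L t y z = deriv (\<lambda>z'. L t y z') z"

definition Jfun :: "real \<Rightarrow> real \<Rightarrow> real \<Rightarrow> (real \<Rightarrow> real \<Rightarrow> real \<Rightarrow> real) \<Rightarrow> (real \<Rightarrow> real) \<Rightarrow> real \<Rightarrow> real" where
  "Jfun a b alpha L x rho = integral {a..b} (\<lambda>t. L t (x t) (caputo_kat a b alpha rho x t))"

end

theory Submission
  imports Defs
begin

definition kk :: "real \<Rightarrow> real \<Rightarrow> real \<Rightarrow> real \<Rightarrow> real" where
  "kk al r t \<tau> = (t powr r - \<tau> powr r) powr (- al)"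

definition mlo :: "real \<Rightarrow> real \<Rightarrow> real \<Rightarrow> real \<Rightarrow> real" where
  "mlo a b r1 r2 = r1 * min 1 (a powr r2) / b"

definition Bup :: "real \<Rightarrow> real \<Rightarrow> real" where
  "Bup b r2 = max 1 (b powr r2)"

lemma pow_lower:
  fixes a \<xi> r r2 :: real
  assumes "0 < a" "a \<le> \<xi>" "0 \<le> r" "r \<le> r2"
  shows "min 1 (a powr r2) \<le> \<xi> powr r"
proof (cases "1 \<le> \<xi>")
  case True
  then show ?thesis using assms ge_one_powr_ge_zero by (meson min.coboundedI1)
next
  case False
  have "\<xi> powr r2 \<le> \<xi> powr r" using False assms by (intro powr_mono') auto
  moreover have "a powr r2 \<le> \<xi> powr r2" using assms by (intro powr_mono2) auto
  ultimately show ?thesis by linarith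
qed

lemma pow_upper:
  fixes b \<xi> r r2 :: real
  assumes "0 < \<xi>" "\<xi> \<le> b" "0 \<le> r" "r \<le> r2"
  shows "\<xi> powr r \<le> Bup b r2"
proof (cases "\<xi> \<le> 1")
  case True
  then have "\<xi> powr r \<le> 1" using assms by (intro powr_le1) auto
  then show ?thesis unfolding Bup_def by linarith
next
  case False
  have "\<xi> powr r \<le> \<xi> powr r2" using False assms by (intro powr_mono) auto
  moreover have "\<xi> powr r2 \<le> b powr r2" using assms by (intro powr_mono2) auto
  ultimately show ?thesis unfolding Bup_def by linarith
qed

lemma mlo_pos: "0 < a \<Longrightarrow> 0 < b \<Longrightarrow> 0 < r1 \<Longrightarrow> 0 < mlo a b r1 r2"
  unfolding mlo_def by auto

lemma diff_lower:
  fixes a b r r1 r2 t \<tau> :: real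
  assumes "0 < a" "a \<le> \<tau>" "\<tau> \<le> t" "t \<le> b" "0 < r1" "r1 \<le> r" "r \<le> r2"
  shows "mlo a b r1 r2 * (t - \<tau>) \<le> t powr r - \<tau> powr r"
proof (cases "\<tau> = t")
  case True then show ?thesis by simp
next
  case False
  then have lt: "\<tau> < t" using assms by auto
  have "\<And>x. \<tau> \<le> x \<Longrightarrow> x \<le> t \<Longrightarrow> ((\<lambda>z. z powr r) has_real_derivative r * x powr (r - 1)) (at x)"
    using assms by (auto intro!: has_real_derivative_powr)
  from MVT2[OF lt this] obtain z where z: "\<tau> < z" "z < t"
    "t powr r - \<tau> powr r = (t - \<tau>) * (r * z powr (r - 1))" by blast
  have zpos: "0 < z" using z assms by auto
  have "z powr (r - 1) = z powr r / z" using zpos by (simp add: powr_diff)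
  moreover have "min 1 (a powr r2) \<le> z powr r" using assms z by (intro pow_lower) auto
  ultimately have "min 1 (a powr r2) / b \<le> z powr (r - 1)"
    using zpos z assms by (simp add: divide_simps) (smt (verit, best) mult_mono powr_ge_zero)
  then have "r1 * (min 1 (a powr r2) / b) \<le> r * z powr (r - 1)"
    using assms by (intro mult_mono) auto
  then have "mlo a b r1 r2 \<le> r * z powr (r - 1)" unfolding mlo_def by simp
  then show ?thesis using z lt by (simp add: mult_left_mono mult.commute)
qed

lemma kk_nonneg: "0 \<le> kk al r t \<tau>" unfolding kk_def by simp

lemma kk_diag: "kk al r t t = 0" unfolding kk_def by simp

lemma kk_bound:
  fixes a b r r1 r2 t \<tau> al :: real
  assumes "0 < a" "a \<le> \<tau>" "\<tau> \<le> t" "t \<le> b" "0 < r1" "r1 \<le> r" "r \<le> r2" "0 < al"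
  shows "kk al r t \<tau> \<le> mlo a b r1 r2 powr (- al) * (t - \<tau>) powr (- al)"
proof (cases "\<tau> = t")
  case True then show ?thesis by (simp add: kk_diag)
next
  case False
  have m: "0 < mlo a b r1 r2" using assms by (intro mlo_pos) auto
  have pos: "0 < mlo a b r1 r2 * (t - \<tau>)" using m False assms by auto
  have "(t powr r - \<tau> powr r) powr (- al) \<le> (mlo a b r1 r2 * (t - \<tau>)) powr (- al)"
    using diff_lower[OF assms(1-7)] pos assms by (intro powr_mono2') auto
  also have "\<dots> = mlo a b r1 r2 powr (- al) * (t - \<tau>) powr (- al)"
    using m False assms by (simp add: powr_mult)
  finally show ?thesis unfolding kk_def .
qed

lemma pow_integral_left:
  fixes a t al :: real
  assumes "0 < al" "al < 1" "a \<le> t"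
  shows "((\<lambda>\<tau>. (t - \<tau>) powr (- al)) has_integral ((t - a) powr (1 - al) / (1 - al))) {a..t}"
proof -
  let ?F = "\<lambda>\<tau>. - ((t - \<tau>) powr (1 - al) / (1 - al))"
  have "((\<lambda>\<tau>. (t - \<tau>) powr (- al)) has_integral ?F t - ?F a) {a..t}"
  proof (rule fundamental_theorem_of_calculus_interior[OF assms(3)])
    show "continuous_on {a..t} ?F"
      using assms by (intro continuous_intros continuous_on_powr') auto
    fix x assume x: "x \<in> {a<..<t}"
    have "((\<lambda>\<tau>. (t - \<tau>) powr (1 - al)) has_real_derivative
        (t - x) powr (1 - al) * (0 * ln (t - x) + (-1) * (1 - al) / (t - x))) (at x)"
      using x by (intro DERIV_powr derivative_eq_intros) auto
    moreover have "(t - x) powr (1 - al) * (0 * ln (t - x) + (-1) * (1 - al) / (t - x))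
        = - ((1 - al) * (t - x) powr (- al))"
    proof -
      have "(t - x) powr (1 - al) = (t - x) * (t - x) powr (- al)"
        using x powr_add[of "_" 1 "- al"] by (simp add: powr_add[of _ 1 "-al", simplified])
      note eq = this
      show ?thesis using x by (subst eq) (simp add: field_simps)
    qed
    ultimately have "((\<lambda>\<tau>. (t - \<tau>) powr (1 - al)) has_real_derivative - ((1 - al) * (t - x) powr (- al))) (at x)"
      by simp
    note d = this
    have "(?F has_real_derivative (t - x) powr (- al)) (at x)"
      using DERIV_minus[OF DERIV_cdivide[OF d, of "1 - al"]] assms by simp
    then show "(?F has_vector_derivative (t - x) powr (- al)) (at x)"
      by (simp add: has_real_derivative_iff_has_vector_derivative)
  qed
  then show ?thesis using assms by simp
qed

lemma pow_integral_right:
  fixes b s al :: real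
  assumes "0 < al" "al < 1" "s \<le> b"
  shows "((\<lambda>t. (t - s) powr (- al)) has_integral ((b - s) powr (1 - al) / (1 - al))) {s..b}"
proof -
  let ?F = "\<lambda>t. (t - s) powr (1 - al) / (1 - al)"
  have "((\<lambda>t. (t - s) powr (- al)) has_integral ?F b - ?F s) {s..b}"
  proof (rule fundamental_theorem_of_calculus_interior[OF assms(3)])
    show "continuous_on {s..b} ?F"
      using assms by (intro continuous_intros continuous_on_powr') auto
    fix x assume x: "x \<in> {s<..<b}"
    have "((\<lambda>t. (t - s) powr (1 - al)) has_real_derivative
        (x - s) powr (1 - al) * (0 * ln (x - s) + 1 * (1 - al) / (x - s))) (at x)"
      using x by (intro DERIV_powr derivative_eq_intros) auto
    moreover have "(x - s) powr (1 - al) * (0 * ln (x - s) + 1 * (1 - al) / (x - s))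
        = ((1 - al) * (x - s) powr (- al))"
    proof -
      have "(x - s) powr (1 - al) = (x - s) * (x - s) powr (- al)"
        using x powr_add[of "_" 1 "- al"] by (simp add: powr_add[of _ 1 "-al", simplified])
      note eq = this
      show ?thesis using x by (subst eq) (simp add: field_simps)
    qed
    ultimately have "((\<lambda>t. (t - s) powr (1 - al)) has_real_derivative ((1 - al) * (x - s) powr (- al))) (at x)"
      by simp
    note d = this
    have "(?F has_real_derivative (x - s) powr (- al)) (at x)"
      using DERIV_cdivide[OF d, of "1 - al"] assms by simp
    then show "(?F has_vector_derivative (x - s) powr (- al)) (at x)"
      by (simp add: has_real_derivative_iff_has_vector_derivative)
  qed
  then show ?thesis using assms by simp
qed

lemma borel_lebesgue_on:
  fixes f :: "real \<Rightarrow> real"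
  assumes "f \<in> borel_measurable borel"
  shows "f \<in> borel_measurable (lebesgue_on S)"
proof -
  have "f \<in> borel_measurable lborel" using assms by simp
  then have "f \<in> borel_measurable lebesgue" by (rule measurable_completion)
  then show ?thesis by (rule measurable_restrict_space1)
qed

lemma clamp_cont:
  fixes g :: "real \<Rightarrow> real"
  assumes "continuous_on {a..b} g" "a \<le> b"
  shows "continuous_on UNIV (\<lambda>\<tau>. g (max a (min b \<tau>)))"
  by (rule continuous_on_compose2[OF assms(1)]) (use assms in \<open>auto intro!: continuous_intros\<close>)

lemma cont_bound:
  fixes g :: "real \<Rightarrow> real"
  assumes "continuous_on {a..b} g"
  obtains G where "0 \<le> G" "\<And>\<tau>. \<tau> \<in> {a..b} \<Longrightarrow> \<bar>g \<tau>\<bar> \<le> G"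
proof -
  have "bounded (g ` {a..b})" by (intro compact_imp_bounded compact_continuous_image assms) auto
  then obtain B where "\<forall>y\<in>g ` {a..b}. norm y \<le> B" by (auto simp: bounded_iff)
  then have "\<And>\<tau>. \<tau> \<in> {a..b} \<Longrightarrow> \<bar>g \<tau>\<bar> \<le> max 0 B"
    by (metis (no_types, lifting) image_eqI max.coboundedI2 real_norm_def)
  then show ?thesis using that[of "max 0 B"] by simp
qed

lemma kk_meas: "(\<lambda>\<tau>. kk al r t \<tau> * h \<tau>) \<in> borel_measurable borel"
  if "h \<in> borel_measurable borel"
  using that unfolding kk_def by measurable

lemma kk_int:
  fixes a b t r r1 r2 al G :: real and g :: "real \<Rightarrow> real"
  assumes ab: "0 < a" "a \<le> t" "t \<le> b" and al: "0 < al" "al < 1"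
    and r: "0 < r1" "r1 \<le> r" "r \<le> r2"
    and g: "continuous_on {a..b} g" and G: "\<And>\<tau>. \<tau> \<in> {a..b} \<Longrightarrow> \<bar>g \<tau>\<bar> \<le> G"
  shows "(\<lambda>\<tau>. kk al r t \<tau> * g \<tau>) absolutely_integrable_on {a..t}"
    "\<bar>integral {a..t} (\<lambda>\<tau>. kk al r t \<tau> * g \<tau>)\<bar>
       \<le> G * mlo a b r1 r2 powr (- al) * ((t - a) powr (1 - al) / (1 - al))"
proof -
  let ?M = "mlo a b r1 r2 powr (- al)"
  let ?gc = "\<lambda>\<tau>. g (max a (min b \<tau>))"
  have gc: "?gc \<in> borel_measurable borel"
    using clamp_cont[OF g] ab by (intro borel_measurable_continuous_onI) auto
  have "(\<lambda>\<tau>. kk al r t \<tau> * ?gc \<tau>) \<in> borel_measurable (lebesgue_on {a..t})"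
    by (intro borel_lebesgue_on kk_meas gc)
  moreover have "\<And>\<tau>. \<tau> \<in> {a..t} \<Longrightarrow> kk al r t \<tau> * ?gc \<tau> = kk al r t \<tau> * g \<tau>"
    using ab by auto
  ultimately have meas: "(\<lambda>\<tau>. kk al r t \<tau> * g \<tau>) \<in> borel_measurable (lebesgue_on {a..t})"
    using measurable_lebesgue_cong[of "{a..t}" "(\<lambda>\<tau>. kk al r t \<tau> * ?gc \<tau>)" "(\<lambda>\<tau>. kk al r t \<tau> * g \<tau>)"] by simp
  have hint: "((\<lambda>\<tau>. G * ?M * (t - \<tau>) powr (- al)) has_integral
       G * ?M * ((t - a) powr (1 - al) / (1 - al))) {a..t}"
    using pow_integral_left[OF al ab(2)] by (intro has_integral_mult_right)
  have bnd: "norm (kk al r t \<tau> * g \<tau>) \<le> G * ?M * (t - \<tau>) powr (- al)" if "\<tau> \<in> {a..t}" for \<tau>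
  proof -
    have "norm (kk al r t \<tau> * g \<tau>) = kk al r t \<tau> * \<bar>g \<tau>\<bar>" using kk_nonneg by (simp add: abs_mult)
    also have "\<dots> \<le> (?M * (t - \<tau>) powr (- al)) * G"
      using that ab r al G[of \<tau>] kk_bound[of a \<tau> t b r1 r r2 al] kk_nonneg
      by (intro mult_mono) auto
    finally show ?thesis by (simp add: mult_ac)
  qed
  show ai: "(\<lambda>\<tau>. kk al r t \<tau> * g \<tau>) absolutely_integrable_on {a..t}"
    using hint by (intro measurable_bounded_by_integrable_imp_absolutely_integrable[OF meas _ _ bnd])
      (auto simp: has_integral_integrable)
  have "norm (integral {a..t} (\<lambda>\<tau>. kk al r t \<tau> * g \<tau>)) \<le> integral {a..t} (\<lambda>\<tau>. G * ?M * (t - \<tau>) powr (- al))"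
    using ai hint bnd by (intro integral_norm_bound_integral) (auto simp: absolutely_integrable_on_def has_integral_integrable)
  also have "integral {a..t} (\<lambda>\<tau>. G * ?M * (t - \<tau>) powr (- al)) = G * ?M * ((t - a) powr (1 - al) / (1 - al))"
    by (rule integral_unique[OF hint])
  finally show "\<bar>integral {a..t} (\<lambda>\<tau>. kk al r t \<tau> * g \<tau>)\<bar>
       \<le> G * ?M * ((t - a) powr (1 - al) / (1 - al))" by simp
qed

lemma dct_filter:
  fixes f :: "real \<Rightarrow> real \<Rightarrow> real" and S :: "real set"
  assumes ev: "\<forall>\<^sub>F y in at y0 within T. f y integrable_on S \<and> (\<forall>x\<in>S. \<bar>f y x\<bar> \<le> h x)"
    and h: "h integrable_on S"
    and lim: "\<And>x. x \<in> S \<Longrightarrow> ((\<lambda>y. f y x) \<longlongrightarrow> g x) (at y0 within T)"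
  shows "((\<lambda>y. integral S (f y)) \<longlongrightarrow> integral S g) (at y0 within T)"
  unfolding tendsto_at_iff_sequentially
proof (intro allI impI)
  fix X :: "nat \<Rightarrow> real" assume X: "\<forall>i. X i \<in> T - {y0}" "X \<longlonglongrightarrow> y0"
  have Xf: "filterlim X (at y0 within T) sequentially"
    using X by (auto simp: filterlim_at intro!: always_eventually)
  from filterlim_iff[THEN iffD1, OF Xf, rule_format, OF ev]
  obtain N where N: "\<And>n. n \<ge> N \<Longrightarrow> f (X n) integrable_on S \<and> (\<forall>x\<in>S. \<bar>f (X n) x\<bar> \<le> h x)"
    by (auto simp: eventually_sequentially)
  have "(\<lambda>n. integral S (f (X (n + N)))) \<longlonglongrightarrow> integral S g"
  proof (rule dominated_convergence(2)[where h=h])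
    show "f (X (n + N)) integrable_on S" for n using N[of "n + N"] by simp
    show "h integrable_on S" by (fact h)
    show "norm (f (X (n + N)) x) \<le> h x" if "x \<in> S" for n x using N[of "n + N"] that by simp
    show "(\<lambda>n. f (X (n + N)) x) \<longlonglongrightarrow> g x" if "x \<in> S" for x
    proof -
      have "(\<lambda>n. f (X n) x) \<longlonglongrightarrow> g x"
        using filterlim_compose[OF lim[OF that] Xf] .
      then show ?thesis by (rule LIMSEQ_ignore_initial_segment)
    qed
  qed
  then show "((\<lambda>y. integral S (f y)) \<circ> X) \<longlonglongrightarrow> integral S g"
    unfolding o_def by (rule LIMSEQ_offset)
qed

definition Iop :: "real \<Rightarrow> real \<Rightarrow> (real \<Rightarrow> real) \<Rightarrow> real \<Rightarrow> real \<Rightarrow> real" where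
  "Iop al r g a t = integral {a..t} (\<lambda>\<tau>. kk al r t \<tau> * g \<tau>)"

lemma Iop_subst:
  fixes a t :: real
  assumes "a < t" "(\<phi> has_integral I) {a..t}"
  shows "I = (t - a) * integral {0..1} (\<lambda>s. \<phi> (a + (t - a) * s))"
    "(\<lambda>s. \<phi> (a + (t - a) * s)) integrable_on {0..1}"
proof -
  have "((\<lambda>s. \<phi> ((t - a) *\<^sub>R s + a)) has_integral (I /\<^sub>R (t - a) ^ DIM(real)))
           (cbox ((a - a) /\<^sub>R (t - a)) ((t - a) /\<^sub>R (t - a)))"
    using assms by (intro has_integral_affinity') auto
  then have "((\<lambda>s. \<phi> (a + (t - a) * s)) has_integral (I / (t - a))) {0..1}"
    using assms by (simp add: add.commute cbox_interval divide_inverse mult.commute)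
  then show "I = (t - a) * integral {0..1} (\<lambda>s. \<phi> (a + (t - a) * s))"
      "(\<lambda>s. \<phi> (a + (t - a) * s)) integrable_on {0..1}"
    using assms by (auto simp add: integral_unique has_integral_integrable)
qed

lemma ev_within_in: "\<forall>\<^sub>F t in at t0 within S. t \<in> S"
  by (simp add: eventually_at_filter)

lemma Iop_cont:
  fixes a b al r :: real and g :: "real \<Rightarrow> real"
  assumes ab: "0 < a" "a \<le> b" and al: "0 < al" "al < 1" and r: "0 < r"
    and g: "continuous_on {a..b} g"
  shows "continuous_on {a..b} (Iop al r g a)"
proof -
  obtain G where G: "0 \<le> G" "\<And>\<tau>. \<tau> \<in> {a..b} \<Longrightarrow> \<bar>g \<tau>\<bar> \<le> G"
    using cont_bound[OF g] by blast
  define M where "M = mlo a b r r powr (- al)"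
  have M: "0 \<le> M" unfolding M_def by simp
  have int: "(\<lambda>\<tau>. kk al r t \<tau> * g \<tau>) absolutely_integrable_on {a..t}"
    and bd: "\<bar>Iop al r g a t\<bar> \<le> G * M * ((t - a) powr (1 - al) / (1 - al))"
    if "t \<in> {a..b}" for t
    using kk_int[of a t b al r r r g G] that ab al r g G unfolding Iop_def M_def by auto
  show ?thesis unfolding continuous_on_def
  proof (intro ballI)
    fix t0 assume t0: "t0 \<in> {a..b}"
    show "(Iop al r g a \<longlongrightarrow> Iop al r g a t0) (at t0 within {a..b})"
    proof (cases "t0 = a")
      case True
      have z: "Iop al r g a a = 0" unfolding Iop_def by simp
      have ev0: "\<forall>\<^sub>F t in at a within {a..b}. 0 \<le> t - a"
        using ev_within_in[of "{a..b}" a] by eventually_elim auto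
      have "((\<lambda>t. G * M * ((t - a) powr (1 - al) / (1 - al))) \<longlongrightarrow> G * M * ((a - a) powr (1 - al) / (1 - al))) (at a within {a..b})"
        using al ev0 by (intro tendsto_intros tendsto_powr') auto
      then have lim0: "((\<lambda>t. G * M * ((t - a) powr (1 - al) / (1 - al))) \<longlongrightarrow> 0) (at a within {a..b})"
        using al by simp
      have "\<forall>\<^sub>F t in at a within {a..b}. norm (Iop al r g a t) \<le> G * M * ((t - a) powr (1 - al) / (1 - al))"
        using ev_within_in[of "{a..b}" a] by eventually_elim (use bd in auto)
      then have "(Iop al r g a \<longlongrightarrow> 0) (at a within {a..b})"
        by (rule Lim_null_comparison[OF _ lim0])
      then show ?thesis using True z by simp
    next
      case False
      with t0 have lt: "a < t0" by auto
      define c where "c = (a + t0) / 2"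
      have c: "a < c" "c < t0" using lt unfolding c_def by auto
      define F where "F t s = kk al r t (a + (t - a) * s) * g (a + (t - a) * s)" for t s
      define h where "h s = G * M * (c - a) powr (- al) * (1 - s) powr (- al)" for s
      have ev_c: "\<forall>\<^sub>F t in at t0 within {a..b}. c < t"
        using order_tendstoD(1)[OF tendsto_ident_at c(2)] .
      have sub: "Iop al r g a t = (t - a) * integral {0..1} (F t) \<and> F t integrable_on {0..1}"
        if "t \<in> {a..b}" "c < t" for t
      proof -
        have "((\<lambda>\<tau>. kk al r t \<tau> * g \<tau>) has_integral Iop al r g a t) {a..t}"
          using int[OF that(1)] unfolding Iop_def
          by (simp add: absolutely_integrable_on_def has_integral_integral)
        from Iop_subst[OF _ this] that c show ?thesis unfolding F_def by auto
      qed
      have hint: "h integrable_on {0..1}"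
      proof -
        have "((\<lambda>s. (1 - s) powr (- al)) has_integral ((1 - 0) powr (1 - al) / (1 - al))) {0..1}"
          using pow_integral_left[of al 0 1] al by simp
        from has_integral_mult_right[OF this, of "G * M * (c - a) powr (- al)"]
        show ?thesis unfolding h_def by (auto simp: has_integral_integrable mult.assoc)
      qed
      have bound: "\<bar>F t s\<bar> \<le> h s" if "t \<in> {a..b}" "c < t" "s \<in> {0..1}" for t s
      proof (cases "s = 1")
        case True
        then show ?thesis unfolding F_def h_def using G M by (simp add: kk_diag)
      next
        case False
        with that have s: "0 \<le> s" "s < 1" by auto
        let ?\<tau> = "a + (t - a) * s"
        have m1: "(t - a) * s \<le> t - a" using mult_left_mono[of s 1 "t - a"] that c s by simp
        have m2: "0 \<le> (t - a) * s" using that c s by simp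
        have \<tau>: "a \<le> ?\<tau>" "?\<tau> \<le> t" using m1 m2 by linarith+
        have "\<bar>F t s\<bar> = kk al r t ?\<tau> * \<bar>g ?\<tau>\<bar>" unfolding F_def by (simp add: abs_mult kk_nonneg)
        also have "\<dots> \<le> (M * (t - ?\<tau>) powr (- al)) * G"
          using kk_bound[of a ?\<tau> t b r r r al] \<tau> that ab r al G(2)[of ?\<tau>] kk_nonneg
          unfolding M_def by (intro mult_mono) auto
        also have "t - ?\<tau> = (t - a) * (1 - s)" by (simp add: algebra_simps)
        also have "((t - a) * (1 - s)) powr (- al) = (t - a) powr (- al) * (1 - s) powr (- al)"
          using that c s by (simp add: powr_mult)
        also have "(t - a) powr (- al) \<le> (c - a) powr (- al)"
          using that c al by (intro powr_mono2') auto
        then have "M * ((t - a) powr (- al) * (1 - s) powr (- al)) * G \<le> M * ((c - a) powr (- al) * (1 - s) powr (- al)) * G"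
          using M G by (intro mult_right_mono mult_left_mono) auto
        finally show ?thesis unfolding h_def by (simp add: mult_ac)
      qed
      have lim: "((\<lambda>t. F t s) \<longlongrightarrow> F t0 s) (at t0 within {a..b})" if "s \<in> {0..1}" for s
      proof (cases "s = 1")
        case True
        then show ?thesis unfolding F_def by (simp add: kk_diag)
      next
        case False
        with that have s: "0 \<le> s" "s < 1" by auto
        let ?\<tau>0 = "a + (t0 - a) * s"
        have m1: "(t0 - a) * s < t0 - a" using mult_strict_left_mono[of s 1 "t0 - a"] lt s by simp
        have m2: "0 \<le> (t0 - a) * s" using lt s by simp
        have \<tau>0: "0 < ?\<tau>0" "?\<tau>0 < t0" "?\<tau>0 \<in> {a..b}" using lt s t0 ab m1 m2 by auto
        have "?\<tau>0 powr r < t0 powr r" using \<tau>0 r by (intro powr_less_mono2) auto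
        then have ne: "t0 powr r - ?\<tau>0 powr r \<noteq> 0" by simp
        have l1: "((\<lambda>t. (t powr r - (a + (t - a) * s) powr r) powr (- al)) \<longlongrightarrow>
            (t0 powr r - ?\<tau>0 powr r) powr (- al)) (at t0 within {a..b})"
          using ne \<tau>0 lt ab by (intro tendsto_powr tendsto_intros) auto
        have ev2: "\<forall>\<^sub>F t in at t0 within {a..b}. a + (t - a) * s \<in> {a..b}"
          using ev_within_in[of "{a..b}" t0]
        proof eventually_elim
          case (elim t)
          have m1: "(t - a) * s \<le> t - a" using mult_left_mono[of s 1 "t - a"] elim s by simp
          have m2: "0 \<le> (t - a) * s" using elim s by simp
          show ?case using m1 m2 elim by auto
        qed
        have l2: "((\<lambda>t. g (a + (t - a) * s)) \<longlongrightarrow> g ?\<tau>0) (at t0 within {a..b})"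
          by (rule continuous_on_tendsto_compose[OF g _ \<tau>0(3) ev2]) (intro tendsto_intros)
        show ?thesis unfolding F_def kk_def using tendsto_mult[OF l1 l2] by simp
      qed
      have ev: "\<forall>\<^sub>F t in at t0 within {a..b}. F t integrable_on {0..1} \<and> (\<forall>x\<in>{0..1}. \<bar>F t x\<bar> \<le> h x)"
        using ev_c ev_within_in[of "{a..b}" t0] by eventually_elim (use sub bound in auto)
      have "((\<lambda>t. integral {0..1} (F t)) \<longlongrightarrow> integral {0..1} (F t0)) (at t0 within {a..b})"
        by (rule dct_filter[OF ev hint lim])
      then have "((\<lambda>t. (t - a) * integral {0..1} (F t)) \<longlongrightarrow> (t0 - a) * integral {0..1} (F t0)) (at t0 within {a..b})"
        by (intro tendsto_intros)
      moreover have "(t0 - a) * integral {0..1} (F t0) = Iop al r g a t0"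
        using sub[OF t0 c(2)] by simp
      moreover have "\<forall>\<^sub>F t in at t0 within {a..b}. (t - a) * integral {0..1} (F t) = Iop al r g a t"
        using ev_c ev_within_in[of "{a..b}" t0] by eventually_elim (use sub in auto)
      ultimately show ?thesis using Lim_transform_eventually by fastforce
    qed
  qed
qed

definition Dk :: "real \<Rightarrow> real \<Rightarrow> real \<Rightarrow> real \<Rightarrow> real" where
  "Dk al r t \<tau> = (if \<tau> < t then - al * (t powr r - \<tau> powr r) powr (- al - 1) *
       (t powr r * ln t - \<tau> powr r * ln \<tau>) else 0)"

lemma kk_deriv_r:
  fixes al r t \<tau> :: real
  assumes "0 < \<tau>" "\<tau> < t" "0 < r"
  shows "((\<lambda>r. kk al r t \<tau>) has_real_derivative Dk al r t \<tau>) (at r)"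
proof -
  let ?g = "\<lambda>r. t powr r - \<tau> powr r"
  have gpos: "0 < ?g r" using assms by (simp add: powr_less_mono2)
  have dt: "((\<lambda>r. t powr r) has_real_derivative t powr r * (1 * ln t + 0 * r / t)) (at r)"
    using assms by (intro DERIV_powr derivative_eq_intros) auto
  have d\<tau>: "((\<lambda>r. \<tau> powr r) has_real_derivative \<tau> powr r * (1 * ln \<tau> + 0 * r / \<tau>)) (at r)"
    using assms by (intro DERIV_powr derivative_eq_intros) auto
  have dg: "(?g has_real_derivative (t powr r * ln t - \<tau> powr r * ln \<tau>)) (at r)"
    using DERIV_diff[OF dt d\<tau>] by simp
  have d: "((\<lambda>r. ?g r powr (- al)) has_real_derivative
      ?g r powr (- al) * (0 * ln (?g r) + (t powr r * ln t - \<tau> powr r * ln \<tau>) * (- al) / ?g r)) (at r)"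
    by (rule DERIV_powr[OF dg gpos]) (rule DERIV_const)
  have "?g r powr (- al) * (0 * ln (?g r) + (t powr r * ln t - \<tau> powr r * ln \<tau>) * (- al) / ?g r)
      = - al * (?g r powr (- al) / ?g r) * (t powr r * ln t - \<tau> powr r * ln \<tau>)"
    using gpos by (simp add: field_simps)
  also have "?g r powr (- al) / ?g r = ?g r powr (- al - 1)"
    using gpos by (simp add: powr_diff)
  finally have "?g r powr (- al) * (0 * ln (?g r) + (t powr r * ln t - \<tau> powr r * ln \<tau>) * (- al) / ?g r)
      = Dk al r t \<tau>"
    unfolding Dk_def using assms by simp
  with d show ?thesis unfolding kk_def by simp
qed

definition Ck :: "real \<Rightarrow> real \<Rightarrow> real \<Rightarrow> real \<Rightarrow> real \<Rightarrow> real" where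
  "Ck al a b r1 r2 = al * (max \<bar>ln a\<bar> \<bar>ln b\<bar> + Bup b r2 / (a * mlo a b r1 r2)) * mlo a b r1 r2 powr (- al)"

lemma Ck_nonneg: "0 < a \<Longrightarrow> 0 < b \<Longrightarrow> 0 < r1 \<Longrightarrow> 0 < al \<Longrightarrow> 0 \<le> Ck al a b r1 r2"
  unfolding Ck_def using mlo_pos[of a b r1 r2] by (auto simp: Bup_def intro!: mult_nonneg_nonneg add_nonneg_nonneg)

lemma Dk_bound:
  fixes a b r r1 r2 t \<tau> al :: real
  assumes "0 < a" "a \<le> \<tau>" "\<tau> \<le> t" "t \<le> b" "0 < r1" "r1 \<le> r" "r \<le> r2" "0 < al"
  shows "\<bar>Dk al r t \<tau>\<bar> \<le> Ck al a b r1 r2 * (t - \<tau>) powr (- al)"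
proof (cases "\<tau> < t")
  case False
  then show ?thesis unfolding Dk_def using Ck_nonneg[of a b r1 al r2] assms by auto
next
  case True
  define m where "m = mlo a b r1 r2"
  define D where "D = t powr r - \<tau> powr r"
  define \<Lambda> where "\<Lambda> = max \<bar>ln a\<bar> \<bar>ln b\<bar>"
  have m: "0 < m" unfolding m_def using assms by (intro mlo_pos) auto
  have Dlow: "m * (t - \<tau>) \<le> D" unfolding m_def D_def using diff_lower[OF assms(1-7)] .
  have "0 < m * (t - \<tau>)" using m True by simp
  then have Dpos: "0 < D" using Dlow by linarith
  have l1: "ln a \<le> ln t" "ln t \<le> ln b" using assms True by auto
  have lnt: "\<bar>ln t\<bar> \<le> \<Lambda>" unfolding \<Lambda>_def using l1 by linarith
  have lnd0: "0 \<le> ln t - ln \<tau>" using assms True by simp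
  have "ln t - ln \<tau> = ln (t / \<tau>)" using assms True by (simp add: ln_div)
  also have "\<dots> \<le> t / \<tau> - 1" using assms True by (intro ln_le_minus_one) auto
  also have "\<dots> = (t - \<tau>) / \<tau>" using assms by (simp add: field_simps)
  also have "\<dots> \<le> (t - \<tau>) / a" using assms True by (intro divide_left_mono) auto
  finally have lnd: "ln t - ln \<tau> \<le> (t - \<tau>) / a" .
  have \<tau>r: "0 \<le> \<tau> powr r" "\<tau> powr r \<le> Bup b r2" using assms by (auto intro!: pow_upper)
  have "(t - \<tau>) / a = (m * (t - \<tau>)) / (a * m)" using m assms by (simp add: field_simps)
  also have "\<dots> \<le> D / (a * m)" using Dlow m assms by (intro divide_right_mono) auto
  finally have "(t - \<tau>) / a \<le> D / (a * m)" .
  have eq: "t powr r * ln t - \<tau> powr r * ln \<tau> = D * ln t + \<tau> powr r * (ln t - ln \<tau>)"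
    unfolding D_def by (simp add: algebra_simps)
  have "\<bar>t powr r * ln t - \<tau> powr r * ln \<tau>\<bar> \<le> D * \<bar>ln t\<bar> + \<tau> powr r * (ln t - ln \<tau>)"
  proof -
    have "\<bar>D * ln t + \<tau> powr r * (ln t - ln \<tau>)\<bar> \<le> \<bar>D * ln t\<bar> + \<bar>\<tau> powr r * (ln t - ln \<tau>)\<bar>"
      by (rule abs_triangle_ineq)
    also have "\<dots> = D * \<bar>ln t\<bar> + \<tau> powr r * (ln t - ln \<tau>)"
      using Dpos \<tau>r lnd0 by (simp add: abs_mult)
    finally show ?thesis unfolding eq .
  qed
  also have "\<dots> \<le> D * \<Lambda> + Bup b r2 * ((t - \<tau>) / a)"
    using Dpos \<tau>r lnd0 lnd lnt by (intro add_mono mult_mono mult_left_mono) (auto simp: Bup_def)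
  also have "\<dots> \<le> D * \<Lambda> + Bup b r2 * (D / (a * m))"
    using \<open>(t - \<tau>) / a \<le> D / (a * m)\<close> \<tau>r by (intro add_left_mono mult_left_mono) (auto simp: Bup_def)
  also have "\<dots> = D * (\<Lambda> + Bup b r2 / (a * m))" by (simp add: algebra_simps)
  finally have num: "\<bar>t powr r * ln t - \<tau> powr r * ln \<tau>\<bar> \<le> D * (\<Lambda> + Bup b r2 / (a * m))" .
  have "\<bar>Dk al r t \<tau>\<bar> = al * D powr (- al - 1) * \<bar>t powr r * ln t - \<tau> powr r * ln \<tau>\<bar>"
    unfolding Dk_def D_def using True assms by (simp add: abs_mult)
  also have "\<dots> \<le> al * D powr (- al - 1) * (D * (\<Lambda> + Bup b r2 / (a * m)))"
    using num assms by (intro mult_left_mono) auto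
  also have "\<dots> = al * (D powr (- al - 1) * D) * (\<Lambda> + Bup b r2 / (a * m))" by (simp add: mult_ac)
  also have "D powr (- al - 1) * D = kk al r t \<tau>"
    unfolding kk_def D_def[symmetric] using Dpos by (simp add: powr_diff)
  also have "al * kk al r t \<tau> * (\<Lambda> + Bup b r2 / (a * m)) \<le>
      al * (m powr (- al) * (t - \<tau>) powr (- al)) * (\<Lambda> + Bup b r2 / (a * m))"
    using kk_bound[OF assms] assms m \<tau>r unfolding m_def[symmetric]
    by (intro mult_right_mono mult_left_mono) (auto simp: \<Lambda>_def Bup_def intro!: add_nonneg_nonneg)
  also have "\<dots> = Ck al a b r1 r2 * (t - \<tau>) powr (- al)"
    unfolding Ck_def m_def[symmetric] \<Lambda>_def[symmetric] by (simp add: mult_ac)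
  finally show ?thesis .
qed

lemma kk_lip:
  fixes a b r r' r1 r2 t \<tau> al :: real
  assumes "0 < a" "a \<le> \<tau>" "\<tau> \<le> t" "t \<le> b" "0 < r1" "r1 \<le> r" "r \<le> r2" "r1 \<le> r'" "r' \<le> r2" "0 < al"
  shows "\<bar>kk al r t \<tau> - kk al r' t \<tau>\<bar> \<le> Ck al a b r1 r2 * (t - \<tau>) powr (- al) * \<bar>r - r'\<bar>"
proof (cases "\<tau> < t")
  case False
  then have "\<tau> = t" using assms by auto
  then show ?thesis by (simp add: kk_diag)
next
  case True
  have "norm ((\<lambda>r. kk al r t \<tau>) r - (\<lambda>r. kk al r t \<tau>) r') \<le> (Ck al a b r1 r2 * (t - \<tau>) powr (- al)) * norm (r - r')"
  proof (rule field_differentiable_bound[where S="{r1..r2}" and f'="\<lambda>z. Dk al z t \<tau>"])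
    show "convex {r1..r2}" by simp
    fix z assume z: "z \<in> {r1..r2}"
    show "((\<lambda>r. kk al r t \<tau>) has_field_derivative Dk al z t \<tau>) (at z within {r1..r2})"
      using z assms True by (intro has_field_derivative_at_within[OF kk_deriv_r]) auto
    show "norm (Dk al z t \<tau>) \<le> Ck al a b r1 r2 * (t - \<tau>) powr (- al)"
      using Dk_bound[of a \<tau> t b r1 z r2 al] z assms by simp
  next
    show "r \<in> {r1..r2}" using assms by simp
  next
    show "r' \<in> {r1..r2}" using assms by simp
  qed
  then show ?thesis by simp
qed

lemma Iop_lip:
  fixes a b t r r' r1 r2 al G :: real and g :: "real \<Rightarrow> real"
  assumes ab: "0 < a" "a \<le> t" "t \<le> b" and al: "0 < al" "al < 1"
    and r: "0 < r1" "r1 \<le> r" "r \<le> r2" "r1 \<le> r'" "r' \<le> r2"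
    and g: "continuous_on {a..b} g" and G: "0 \<le> G" "\<And>\<tau>. \<tau> \<in> {a..b} \<Longrightarrow> \<bar>g \<tau>\<bar> \<le> G"
  shows "\<bar>Iop al r g a t - Iop al r' g a t\<bar> \<le> Ck al a b r1 r2 * G * ((b - a) powr (1 - al) / (1 - al)) * \<bar>r - r'\<bar>"
proof -
  let ?C = "Ck al a b r1 r2"
  have C: "0 \<le> ?C" using ab al r by (intro Ck_nonneg) auto
  have i1: "(\<lambda>\<tau>. kk al r t \<tau> * g \<tau>) integrable_on {a..t}"
    using kk_int(1)[of a t b al r1 r r2 g G] ab al r g G by (auto simp: absolutely_integrable_on_def)
  have i2: "(\<lambda>\<tau>. kk al r' t \<tau> * g \<tau>) integrable_on {a..t}"
    using kk_int(1)[of a t b al r1 r' r2 g G] ab al r g G by (auto simp: absolutely_integrable_on_def)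
  have hint: "((\<lambda>\<tau>. ?C * G * \<bar>r - r'\<bar> * (t - \<tau>) powr (- al)) has_integral
       ?C * G * \<bar>r - r'\<bar> * ((t - a) powr (1 - al) / (1 - al))) {a..t}"
    using pow_integral_left[OF al ab(2)] by (intro has_integral_mult_right)
  have eq: "Iop al r g a t - Iop al r' g a t = integral {a..t} (\<lambda>\<tau>. kk al r t \<tau> * g \<tau> - kk al r' t \<tau> * g \<tau>)"
    unfolding Iop_def using i1 i2 by (simp add: integral_diff)
  have "\<bar>Iop al r g a t - Iop al r' g a t\<bar> \<le> integral {a..t} (\<lambda>\<tau>. ?C * G * \<bar>r - r'\<bar> * (t - \<tau>) powr (- al))"
  proof -
    have "norm (integral {a..t} (\<lambda>\<tau>. kk al r t \<tau> * g \<tau> - kk al r' t \<tau> * g \<tau>))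
        \<le> integral {a..t} (\<lambda>\<tau>. ?C * G * \<bar>r - r'\<bar> * (t - \<tau>) powr (- al))"
    proof (rule integral_norm_bound_integral)
      show "(\<lambda>\<tau>. kk al r t \<tau> * g \<tau> - kk al r' t \<tau> * g \<tau>) integrable_on {a..t}"
        using i1 i2 by (rule integrable_diff)
      show "(\<lambda>\<tau>. ?C * G * \<bar>r - r'\<bar> * (t - \<tau>) powr (- al)) integrable_on {a..t}"
        using hint by (rule has_integral_integrable)
      fix \<tau> assume \<tau>: "\<tau> \<in> {a..t}"
      have "norm (kk al r t \<tau> * g \<tau> - kk al r' t \<tau> * g \<tau>) = \<bar>kk al r t \<tau> - kk al r' t \<tau>\<bar> * \<bar>g \<tau>\<bar>"
        by (simp add: abs_mult left_diff_distrib[symmetric])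
      also have "\<dots> \<le> (?C * (t - \<tau>) powr (- al) * \<bar>r - r'\<bar>) * G"
      proof (rule mult_mono)
        show "\<bar>kk al r t \<tau> - kk al r' t \<tau>\<bar> \<le> ?C * (t - \<tau>) powr (- al) * \<bar>r - r'\<bar>"
          using \<tau> ab al r by (intro kk_lip) auto
        show "\<bar>g \<tau>\<bar> \<le> G" using G(2)[of \<tau>] \<tau> ab by simp
        show "0 \<le> ?C * (t - \<tau>) powr (- al) * \<bar>r - r'\<bar>" using C by simp
      qed simp
      finally show "norm (kk al r t \<tau> * g \<tau> - kk al r' t \<tau> * g \<tau>) \<le> ?C * G * \<bar>r - r'\<bar> * (t - \<tau>) powr (- al)"
        by (simp add: mult_ac)
    qed
    then show ?thesis unfolding eq by simp
  qed
  also have "\<dots> = ?C * G * \<bar>r - r'\<bar> * ((t - a) powr (1 - al) / (1 - al))"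
    by (rule integral_unique[OF hint])
  also have "\<dots> \<le> ?C * G * \<bar>r - r'\<bar> * ((b - a) powr (1 - al) / (1 - al))"
  proof -
    have "(t - a) powr (1 - al) \<le> (b - a) powr (1 - al)" using ab al by (intro powr_mono2) auto
    then have "(t - a) powr (1 - al) / (1 - al) \<le> (b - a) powr (1 - al) / (1 - al)"
      using al by (intro divide_right_mono) auto
    then show ?thesis using C G by (intro mult_left_mono) auto
  qed
  finally show ?thesis by (simp add: mult_ac)
qed

lemma Iop_deriv:
  fixes a b t r0 al :: real and g :: "real \<Rightarrow> real"
  assumes ab: "0 < a" "a \<le> t" "t \<le> b" and al: "0 < al" "al < 1" and r0: "0 < r0"
    and g: "continuous_on {a..b} g"
  shows "((\<lambda>r. Iop al r g a t) has_real_derivative integral {a..t} (\<lambda>\<tau>. Dk al r0 t \<tau> * g \<tau>)) (at r0)"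
proof -
  obtain G where G: "0 \<le> G" "\<And>\<tau>. \<tau> \<in> {a..b} \<Longrightarrow> \<bar>g \<tau>\<bar> \<le> G"
    using cont_bound[OF g] by blast
  define r1 where "r1 = r0 / 2"
  define r2 where "r2 = 2 * r0"
  have r12: "0 < r1" "r1 < r0" "r0 < r2" using r0 unfolding r1_def r2_def by auto
  let ?C = "Ck al a b r1 r2"
  define Q where "Q y \<tau> = (kk al y t \<tau> - kk al r0 t \<tau>) / (y - r0) * g \<tau>" for y \<tau>
  define h where "h \<tau> = ?C * G * (t - \<tau>) powr (- al)" for \<tau>
  have C: "0 \<le> ?C" using ab al r12 by (intro Ck_nonneg) auto
  have int: "(\<lambda>\<tau>. kk al y t \<tau> * g \<tau>) integrable_on {a..t}" if "r1 \<le> y" "y \<le> r2" for y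
    using kk_int(1)[of a t b al r1 y r2 g G] ab al r12 that g G by (auto simp: absolutely_integrable_on_def)
  have Qeq: "Q y = (\<lambda>\<tau>. inverse (y - r0) * (kk al y t \<tau> * g \<tau> - kk al r0 t \<tau> * g \<tau>))" for y
    unfolding Q_def by (rule ext) (simp add: divide_inverse algebra_simps)
  have Qint: "Q y integrable_on {a..t} \<and> integral {a..t} (Q y) = (Iop al y g a t - Iop al r0 g a t) / (y - r0)"
    if "r1 \<le> y" "y \<le> r2" for y
  proof -
    have d: "(\<lambda>\<tau>. kk al y t \<tau> * g \<tau> - kk al r0 t \<tau> * g \<tau>) integrable_on {a..t}"
      using int[OF that] int[of r0] r12 by (intro integrable_diff) auto
    have "Q y integrable_on {a..t}" unfolding Qeq using integrable_on_cmult_left[OF d] by simp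
    moreover have "integral {a..t} (Q y) = (Iop al y g a t - Iop al r0 g a t) / (y - r0)"
      unfolding Qeq Iop_def using int[OF that] int[of r0] r12
      by (simp add: integral_diff divide_inverse mult.commute)
    ultimately show ?thesis by simp
  qed
  have Qb: "\<bar>Q y \<tau>\<bar> \<le> h \<tau>" if "r1 \<le> y" "y \<le> r2" "y \<noteq> r0" "\<tau> \<in> {a..t}" for y \<tau>
  proof -
    have "\<bar>kk al y t \<tau> - kk al r0 t \<tau>\<bar> \<le> ?C * (t - \<tau>) powr (- al) * \<bar>y - r0\<bar>"
      using kk_lip[of a \<tau> t b r1 y r2 r0 al] that ab al r12 by auto
    then have "\<bar>kk al y t \<tau> - kk al r0 t \<tau>\<bar> / \<bar>y - r0\<bar> \<le> ?C * (t - \<tau>) powr (- al)"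
      using that by (simp add: divide_simps)
    note q = this
    have "\<bar>(kk al y t \<tau> - kk al r0 t \<tau>) / (y - r0)\<bar> * \<bar>g \<tau>\<bar> \<le> (?C * (t - \<tau>) powr (- al)) * G"
    proof (rule mult_mono)
      show "0 \<le> ?C * (t - \<tau>) powr (- al)" using C by simp
      show "\<bar>(kk al y t \<tau> - kk al r0 t \<tau>) / (y - r0)\<bar> \<le> ?C * (t - \<tau>) powr (- al)"
        using q by (simp add: abs_divide)
      show "\<bar>g \<tau>\<bar> \<le> G" using G(2)[of \<tau>] that ab by simp
    qed simp
    then show ?thesis unfolding Q_def h_def by (simp add: abs_mult mult_ac)
  qed
  have hint: "h integrable_on {a..t}"
  proof -
    from has_integral_mult_right[OF pow_integral_left[OF al ab(2)], of "?C * G"]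
    show ?thesis unfolding h_def by (auto simp: has_integral_integrable mult.assoc)
  qed
  have ev_r: "\<forall>\<^sub>F y in at r0. r1 < y \<and> y < r2 \<and> y \<noteq> r0"
  proof -
    have "\<forall>\<^sub>F y in at r0. r1 < y" using order_tendstoD(1)[OF tendsto_ident_at r12(2)] .
    moreover have "\<forall>\<^sub>F y in at r0. y < r2" using order_tendstoD(2)[OF tendsto_ident_at r12(3)] .
    moreover have "\<forall>\<^sub>F y in at r0. y \<noteq> r0" by (simp add: eventually_at_filter)
    ultimately show ?thesis by eventually_elim auto
  qed
  have ev: "\<forall>\<^sub>F y in at r0. Q y integrable_on {a..t} \<and> (\<forall>x\<in>{a..t}. \<bar>Q y x\<bar> \<le> h x)"
    using ev_r by eventually_elim (use Qint Qb in auto)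
  have lim: "((\<lambda>y. Q y \<tau>) \<longlongrightarrow> Dk al r0 t \<tau> * g \<tau>) (at r0)" if "\<tau> \<in> {a..t}" for \<tau>
  proof (cases "\<tau> < t")
    case True
    have "((\<lambda>r. kk al r t \<tau>) has_real_derivative Dk al r0 t \<tau>) (at r0)"
      using True that ab r0 by (intro kk_deriv_r) auto
    then have "((\<lambda>y. (kk al y t \<tau> - kk al r0 t \<tau>) / (y - r0)) \<longlongrightarrow> Dk al r0 t \<tau>) (at r0)"
      by (simp add: has_field_derivative_iff)
    then show ?thesis unfolding Q_def by (intro tendsto_intros)
  next
    case False
    then have "\<tau> = t" using that by auto
    then show ?thesis unfolding Q_def Dk_def by (simp add: kk_diag)
  qed
  have "((\<lambda>y. integral {a..t} (Q y)) \<longlongrightarrow> integral {a..t} (\<lambda>\<tau>. Dk al r0 t \<tau> * g \<tau>)) (at r0)"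
    by (rule dct_filter[OF ev hint lim])
  moreover have "\<forall>\<^sub>F y in at r0. integral {a..t} (Q y) = (Iop al y g a t - Iop al r0 g a t) / (y - r0)"
    using ev_r by eventually_elim (use Qint in auto)
  ultimately have "((\<lambda>y. (Iop al y g a t - Iop al r0 g a t) / (y - r0)) \<longlongrightarrow> integral {a..t} (\<lambda>\<tau>. Dk al r0 t \<tau> * g \<tau>)) (at r0)"
    by (rule Lim_transform_eventually)
  then show ?thesis by (simp add: has_field_derivative_iff)
qed

lemma abs_int_lborel:
  fixes f :: "real \<Rightarrow> real"
  assumes "f absolutely_integrable_on S" "S \<in> sets borel" "f \<in> borel_measurable borel"
  shows "set_integrable lborel S f" "(LINT x:S|lborel. f x) = integral S f"
proof -
  have m: "(\<lambda>x. indicator S x *\<^sub>R f x) \<in> borel_measurable lborel"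
    using assms(2,3) by measurable
  have "integrable lebesgue (\<lambda>x. indicator S x *\<^sub>R f x)"
    using assms(1) unfolding set_integrable_def .
  then have "integrable lborel (\<lambda>x. indicator S x *\<^sub>R f x)"
    using integrable_completion[OF m] by simp
  then show si: "set_integrable lborel S f" unfolding set_integrable_def .
  show "(LINT x:S|lborel. f x) = integral S f" by (rule set_borel_integral_eq_integral(2)[OF si])
qed

lemma kk_meas_t: "(\<lambda>t. kk al r t s * h t) \<in> borel_measurable borel"
  if "h \<in> borel_measurable borel"
  using that unfolding kk_def by measurable

lemma F_meas:
  fixes fc gc :: "real \<Rightarrow> real"
  assumes [measurable]: "fc \<in> borel_measurable borel" "gc \<in> borel_measurable borel"
  shows "(\<lambda>(t, \<tau>). if a \<le> \<tau> \<and> \<tau> \<le> t \<and> t \<le> b then fc t * kk al r t \<tau> * gc \<tau> else 0)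
      \<in> borel_measurable (lborel \<Otimes>\<^sub>M lborel)"
  unfolding kk_def by measurable

lemma kk_int_right:
  fixes a b s r r1 r2 al Fm :: real and f :: "real \<Rightarrow> real"
  assumes ab: "0 < a" "a \<le> s" "s \<le> b" and al: "0 < al" "al < 1"
    and r: "0 < r1" "r1 \<le> r" "r \<le> r2"
    and f: "continuous_on {a..b} f" and F: "\<And>t. t \<in> {a..b} \<Longrightarrow> \<bar>f t\<bar> \<le> Fm"
  shows "(\<lambda>t. kk al r t s * f t) absolutely_integrable_on {s..b}"
proof -
  let ?M = "mlo a b r1 r2 powr (- al)"
  let ?fc = "\<lambda>\<tau>. f (max a (min b \<tau>))"
  have fc: "?fc \<in> borel_measurable borel"
    using clamp_cont[OF f] ab by (intro borel_measurable_continuous_onI) auto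
  have "(\<lambda>t. kk al r t s * ?fc t) \<in> borel_measurable (lebesgue_on {s..b})"
    by (intro borel_lebesgue_on kk_meas_t fc)
  moreover have "\<And>t. t \<in> {s..b} \<Longrightarrow> kk al r t s * ?fc t = kk al r t s * f t"
    using ab by auto
  ultimately have meas: "(\<lambda>t. kk al r t s * f t) \<in> borel_measurable (lebesgue_on {s..b})"
    using measurable_lebesgue_cong[of "{s..b}" "(\<lambda>t. kk al r t s * ?fc t)" "(\<lambda>t. kk al r t s * f t)"] by simp
  have hint: "((\<lambda>t. Fm * ?M * (t - s) powr (- al)) has_integral
       Fm * ?M * ((b - s) powr (1 - al) / (1 - al))) {s..b}"
    using pow_integral_right[OF al ab(3)] by (intro has_integral_mult_right)
  have bnd: "norm (kk al r t s * f t) \<le> Fm * ?M * (t - s) powr (- al)" if "t \<in> {s..b}" for t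
  proof -
    have "norm (kk al r t s * f t) = kk al r t s * \<bar>f t\<bar>" using kk_nonneg by (simp add: abs_mult)
    also have "\<dots> \<le> (?M * (t - s) powr (- al)) * Fm"
    proof (rule mult_mono)
      show "kk al r t s \<le> ?M * (t - s) powr (- al)"
        using that ab r al by (intro kk_bound) auto
      show "\<bar>f t\<bar> \<le> Fm" using that ab F by simp
    qed simp_all
    finally show ?thesis by (simp add: mult_ac)
  qed
  show ?thesis
    using hint by (intro measurable_bounded_by_integrable_imp_absolutely_integrable[OF meas _ _ bnd])
      (auto simp: has_integral_integrable)
qed

lemma inner_t:
  fixes fc gc :: "real \<Rightarrow> real" and a b al r t :: real
  assumes [measurable]: "fc \<in> borel_measurable borel" "gc \<in> borel_measurable borel"
    and ab: "0 < a" and al: "0 < al" "al < 1" and r: "0 < r"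
    and gc: "continuous_on {a..b} gc"
  shows "integrable lborel (\<lambda>\<tau>. if a \<le> \<tau> \<and> \<tau> \<le> t \<and> t \<le> b then fc t * kk al r t \<tau> * gc \<tau> else 0)
    \<and> (LINT \<tau>|lborel. (if a \<le> \<tau> \<and> \<tau> \<le> t \<and> t \<le> b then fc t * kk al r t \<tau> * gc \<tau> else 0))
      = (if a \<le> t \<and> t \<le> b then fc t * Iop al r gc a t else 0)"
proof -
  show ?thesis
  proof (cases "a \<le> t \<and> t \<le> b")
    case True
    obtain G where G: "0 \<le> G" "\<And>\<tau>. \<tau> \<in> {a..b} \<Longrightarrow> \<bar>gc \<tau>\<bar> \<le> G"
      using cont_bound[OF gc] by blast
    have ai: "(\<lambda>\<tau>. kk al r t \<tau> * gc \<tau>) absolutely_integrable_on {a..t}"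
      using kk_int(1)[of a t b al r r r gc G] True ab al r gc G by auto
    have m: "(\<lambda>\<tau>. kk al r t \<tau> * gc \<tau>) \<in> borel_measurable borel" by (intro kk_meas) simp
    have si: "set_integrable lborel {a..t} (\<lambda>\<tau>. kk al r t \<tau> * gc \<tau>)"
      and li: "(LINT \<tau>:{a..t}|lborel. kk al r t \<tau> * gc \<tau>) = Iop al r gc a t"
      using abs_int_lborel[OF ai _ m] unfolding Iop_def by auto
    have eq: "(\<lambda>\<tau>. if a \<le> \<tau> \<and> \<tau> \<le> t \<and> t \<le> b then fc t * kk al r t \<tau> * gc \<tau> else 0)
        = (\<lambda>\<tau>. indicator {a..t} \<tau> *\<^sub>R (fc t * (kk al r t \<tau> * gc \<tau>)))"
      using True by (auto simp: indicator_def)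
    have si2: "set_integrable lborel {a..t} (\<lambda>\<tau>. fc t * (kk al r t \<tau> * gc \<tau>))"
      using si by (rule set_integrable_mult_right)
    have I: "integrable lborel (\<lambda>\<tau>. if a \<le> \<tau> \<and> \<tau> \<le> t \<and> t \<le> b then fc t * kk al r t \<tau> * gc \<tau> else 0)"
      unfolding eq using si2 unfolding set_integrable_def .
    have "(LINT \<tau>|lborel. (if a \<le> \<tau> \<and> \<tau> \<le> t \<and> t \<le> b then fc t * kk al r t \<tau> * gc \<tau> else 0))
        = (LINT \<tau>:{a..t}|lborel. fc t * (kk al r t \<tau> * gc \<tau>))"
      unfolding eq set_lebesgue_integral_def ..
    also have "\<dots> = fc t * (LINT \<tau>:{a..t}|lborel. kk al r t \<tau> * gc \<tau>)"
      by (rule set_integral_mult_right)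
    finally have E: "(LINT \<tau>|lborel. (if a \<le> \<tau> \<and> \<tau> \<le> t \<and> t \<le> b then fc t * kk al r t \<tau> * gc \<tau> else 0))
      = (if a \<le> t \<and> t \<le> b then fc t * Iop al r gc a t else 0)"
      using li True by simp
    show ?thesis using I E by simp
  next
    case False
    then have eq: "(\<lambda>\<tau>. if a \<le> \<tau> \<and> \<tau> \<le> t \<and> t \<le> b then fc t * kk al r t \<tau> * gc \<tau> else 0) = (\<lambda>_. 0)"
      by auto
    have I: "integrable lborel (\<lambda>\<tau>. if a \<le> \<tau> \<and> \<tau> \<le> t \<and> t \<le> b then fc t * kk al r t \<tau> * gc \<tau> else 0)"
      unfolding eq by simp
    have E: "(LINT \<tau>|lborel. (if a \<le> \<tau> \<and> \<tau> \<le> t \<and> t \<le> b then fc t * kk al r t \<tau> * gc \<tau> else 0))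
      = (if a \<le> t \<and> t \<le> b then fc t * Iop al r gc a t else 0)"
      unfolding eq using False by auto
    show ?thesis using I E by simp
  qed
qed

lemma inner_tau:
  fixes fc gc :: "real \<Rightarrow> real" and a b al r \<tau> :: real
  assumes [measurable]: "fc \<in> borel_measurable borel" "gc \<in> borel_measurable borel"
    and ab: "0 < a" and al: "0 < al" "al < 1" and r: "0 < r"
    and fc: "continuous_on {a..b} fc"
  shows "integrable lborel (\<lambda>t. if a \<le> \<tau> \<and> \<tau> \<le> t \<and> t \<le> b then fc t * kk al r t \<tau> * gc \<tau> else 0)
    \<and> (LINT t|lborel. (if a \<le> \<tau> \<and> \<tau> \<le> t \<and> t \<le> b then fc t * kk al r t \<tau> * gc \<tau> else 0))
      = (if a \<le> \<tau> \<and> \<tau> \<le> b then gc \<tau> * integral {\<tau>..b} (\<lambda>t. kk al r t \<tau> * fc t) else 0)"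
proof -
  show ?thesis
  proof (cases "a \<le> \<tau> \<and> \<tau> \<le> b")
    case True
    obtain Fm where Fm: "0 \<le> Fm" "\<And>t. t \<in> {a..b} \<Longrightarrow> \<bar>fc t\<bar> \<le> Fm"
      using cont_bound[OF fc] by blast
    have ai: "(\<lambda>t. kk al r t \<tau> * fc t) absolutely_integrable_on {\<tau>..b}"
      using kk_int_right[of a \<tau> b al r r r fc Fm] True ab al r fc Fm by auto
    have m: "(\<lambda>t. kk al r t \<tau> * fc t) \<in> borel_measurable borel" by (intro kk_meas_t) simp
    have si: "set_integrable lborel {\<tau>..b} (\<lambda>t. kk al r t \<tau> * fc t)"
      and li: "(LINT t:{\<tau>..b}|lborel. kk al r t \<tau> * fc t) = integral {\<tau>..b} (\<lambda>t. kk al r t \<tau> * fc t)"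
      using abs_int_lborel[OF ai _ m] by auto
    have eq: "(\<lambda>t. if a \<le> \<tau> \<and> \<tau> \<le> t \<and> t \<le> b then fc t * kk al r t \<tau> * gc \<tau> else 0)
        = (\<lambda>t. indicator {\<tau>..b} t *\<^sub>R (gc \<tau> * (kk al r t \<tau> * fc t)))"
      using True by (auto simp: indicator_def)
    have si2: "set_integrable lborel {\<tau>..b} (\<lambda>t. gc \<tau> * (kk al r t \<tau> * fc t))"
      using si by (rule set_integrable_mult_right)
    have I: "integrable lborel (\<lambda>t. if a \<le> \<tau> \<and> \<tau> \<le> t \<and> t \<le> b then fc t * kk al r t \<tau> * gc \<tau> else 0)"
      unfolding eq using si2 unfolding set_integrable_def .
    have "(LINT t|lborel. (if a \<le> \<tau> \<and> \<tau> \<le> t \<and> t \<le> b then fc t * kk al r t \<tau> * gc \<tau> else 0))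
        = (LINT t:{\<tau>..b}|lborel. gc \<tau> * (kk al r t \<tau> * fc t))"
      unfolding eq set_lebesgue_integral_def ..
    also have "\<dots> = gc \<tau> * (LINT t:{\<tau>..b}|lborel. kk al r t \<tau> * fc t)"
      by (rule set_integral_mult_right)
    finally have E: "(LINT t|lborel. (if a \<le> \<tau> \<and> \<tau> \<le> t \<and> t \<le> b then fc t * kk al r t \<tau> * gc \<tau> else 0))
      = (if a \<le> \<tau> \<and> \<tau> \<le> b then gc \<tau> * integral {\<tau>..b} (\<lambda>t. kk al r t \<tau> * fc t) else 0)"
      using li True by simp
    show ?thesis using I E by simp
  next
    case False
    then have eq: "(\<lambda>t. if a \<le> \<tau> \<and> \<tau> \<le> t \<and> t \<le> b then fc t * kk al r t \<tau> * gc \<tau> else 0) = (\<lambda>_. 0)"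
      by auto
    have I: "integrable lborel (\<lambda>t. if a \<le> \<tau> \<and> \<tau> \<le> t \<and> t \<le> b then fc t * kk al r t \<tau> * gc \<tau> else 0)"
      unfolding eq by simp
    have E: "(LINT t|lborel. (if a \<le> \<tau> \<and> \<tau> \<le> t \<and> t \<le> b then fc t * kk al r t \<tau> * gc \<tau> else 0))
      = (if a \<le> \<tau> \<and> \<tau> \<le> b then gc \<tau> * integral {\<tau>..b} (\<lambda>t. kk al r t \<tau> * fc t) else 0)"
      unfolding eq using False by auto
    show ?thesis using I E by simp
  qed
qed

lemma Iop_cong:
  assumes "\<And>\<tau>. \<tau> \<in> {a..t} \<Longrightarrow> g1 \<tau> = g2 \<tau>"
  shows "Iop al r g1 a t = Iop al r g2 a t"
  unfolding Iop_def using assms by (intro integral_cong) auto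

lemma lint_indicator_eq:
  fixes \<phi> \<psi> :: "real \<Rightarrow> real"
  assumes "continuous_on {a..b} \<phi>" "\<And>t. (if a \<le> t \<and> t \<le> b then \<psi> t else 0) = indicator {a..b} t *\<^sub>R \<phi> t"
  shows "(LINT t|lborel. (if a \<le> t \<and> t \<le> b then \<psi> t else 0)) = integral {a..b} \<phi>"
    "integrable lborel (\<lambda>t. if a \<le> t \<and> t \<le> b then \<psi> t else 0)"
proof -
  have si: "set_integrable lborel {a..b} \<phi>"
    unfolding set_integrable_def using assms(1) by (intro borel_integrable_compact) auto
  have "(LINT t|lborel. (if a \<le> t \<and> t \<le> b then \<psi> t else 0)) = (LINT t:{a..b}|lborel. \<phi> t)"
    unfolding set_lebesgue_integral_def assms(2) ..
  also have "\<dots> = integral {a..b} \<phi>" by (rule set_borel_integral_eq_integral(2)[OF si])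
  finally show "(LINT t|lborel. (if a \<le> t \<and> t \<le> b then \<psi> t else 0)) = integral {a..b} \<phi>" .
  show "integrable lborel (\<lambda>t. if a \<le> t \<and> t \<le> b then \<psi> t else 0)"
    unfolding assms(2) using si unfolding set_integrable_def .
qed

lemma fubini_kat:
  fixes a b al r :: real and f g :: "real \<Rightarrow> real"
  assumes ab: "0 < a" "a \<le> b" and al: "0 < al" "al < 1" and r: "0 < r"
    and f: "continuous_on {a..b} f" and g: "continuous_on {a..b} g"
    and K: "continuous_on {a..b} (kat_right_int b al r f)"
  shows "integral {a..b} (\<lambda>t. f t * Iop al r g a t) = integral {a..b} (\<lambda>\<tau>. g \<tau> * kat_right_int b al r f \<tau>)"
proof -
  define fc where "fc \<tau> = f (max a (min b \<tau>))" for \<tau>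
  define gc where "gc \<tau> = g (max a (min b \<tau>))" for \<tau>
  have fcc: "continuous_on UNIV fc" unfolding fc_def using clamp_cont[OF f] ab by simp
  have gcc: "continuous_on UNIV gc" unfolding gc_def using clamp_cont[OF g] ab by simp
  have [measurable]: "fc \<in> borel_measurable borel" "gc \<in> borel_measurable borel"
    using fcc gcc by (auto intro: borel_measurable_continuous_onI)
  have fceq: "fc t = f t" if "t \<in> {a..b}" for t using that unfolding fc_def by simp
  have gceq: "gc t = g t" if "t \<in> {a..b}" for t using that unfolding gc_def by simp
  have gcab: "continuous_on {a..b} gc" "continuous_on {a..b} (\<lambda>x. \<bar>gc x\<bar>)"
    using gcc by (auto intro: continuous_on_subset continuous_intros)
  have fcab: "continuous_on {a..b} fc" using fcc by (auto intro: continuous_on_subset)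
  define F where "F t \<tau> = (if a \<le> \<tau> \<and> \<tau> \<le> t \<and> t \<le> b then fc t * kk al r t \<tau> * gc \<tau> else 0)" for t \<tau>
  have Fm: "(\<lambda>(t, \<tau>). F t \<tau>) \<in> borel_measurable (lborel \<Otimes>\<^sub>M lborel)"
    unfolding F_def by (rule F_meas) measurable
  have it: "integrable lborel (F t) \<and> (LINT \<tau>|lborel. F t \<tau>) = (if a \<le> t \<and> t \<le> b then fc t * Iop al r gc a t else 0)" for t
    unfolding F_def using inner_t[of fc gc a al r b t] ab al r gcab by simp
  have itau: "integrable lborel (\<lambda>t. F t \<tau>) \<and> (LINT t|lborel. F t \<tau>)
      = (if a \<le> \<tau> \<and> \<tau> \<le> b then gc \<tau> * integral {\<tau>..b} (\<lambda>t. kk al r t \<tau> * fc t) else 0)" for \<tau>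
    unfolding F_def using inner_tau[of fc gc a al r b \<tau>] ab al r fcab by simp
  have nrm: "(LINT \<tau>|lborel. norm (F t \<tau>)) = (if a \<le> t \<and> t \<le> b then \<bar>fc t\<bar> * Iop al r (\<lambda>x. \<bar>gc x\<bar>) a t else 0)" for t
  proof -
    have "(LINT \<tau>|lborel. norm (F t \<tau>)) = (LINT \<tau>|lborel. (if a \<le> \<tau> \<and> \<tau> \<le> t \<and> t \<le> b then \<bar>fc t\<bar> * kk al r t \<tau> * \<bar>gc \<tau>\<bar> else 0))"
      unfolding F_def by (intro Bochner_Integration.integral_cong) (auto simp: abs_mult kk_nonneg)
    also have "\<dots> = (if a \<le> t \<and> t \<le> b then \<bar>fc t\<bar> * Iop al r (\<lambda>x. \<bar>gc x\<bar>) a t else 0)"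
      using inner_t[of "\<lambda>x. \<bar>fc x\<bar>" "\<lambda>x. \<bar>gc x\<bar>" a al r b t] ab al r gcab by simp
    finally show ?thesis .
  qed
  have Icont: "continuous_on {a..b} (Iop al r (\<lambda>x. \<bar>gc x\<bar>) a)"
    by (rule Iop_cont[OF ab al r gcab(2)])
  have intnorm: "integrable lborel (\<lambda>t. LINT \<tau>|lborel. norm (F t \<tau>))"
    unfolding nrm
    by (rule lint_indicator_eq(2)[where \<phi>="\<lambda>t. \<bar>fc t\<bar> * Iop al r (\<lambda>x. \<bar>gc x\<bar>) a t"])
       (auto intro!: continuous_intros Icont fcab simp: indicator_def)
  have intF: "integrable (lborel \<Otimes>\<^sub>M lborel) (\<lambda>(t, \<tau>). F t \<tau>)"
    by (rule lborel_pair.Fubini_integrable[OF Fm]) (use intnorm it in auto)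
  have fub: "(LINT \<tau>|lborel. LINT t|lborel. F t \<tau>) = (LINT t|lborel. LINT \<tau>|lborel. F t \<tau>)"
    using lborel_pair.Fubini_integral[OF intF] .
  have Ig: "continuous_on {a..b} (Iop al r g a)" by (rule Iop_cont[OF ab al r g])
  have lhs: "(LINT t|lborel. LINT \<tau>|lborel. F t \<tau>) = integral {a..b} (\<lambda>t. f t * Iop al r g a t)"
  proof -
    have "(LINT t|lborel. LINT \<tau>|lborel. F t \<tau>) = (LINT t|lborel. (if a \<le> t \<and> t \<le> b then fc t * Iop al r gc a t else 0))"
      using it by simp
    also have "\<dots> = integral {a..b} (\<lambda>t. f t * Iop al r g a t)"
    proof (rule lint_indicator_eq(1))
      show "continuous_on {a..b} (\<lambda>t. f t * Iop al r g a t)" by (intro continuous_intros f Ig)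
      fix t
      show "(if a \<le> t \<and> t \<le> b then fc t * Iop al r gc a t else 0) = indicator {a..b} t *\<^sub>R (f t * Iop al r g a t)"
        using fceq[of t] Iop_cong[of a t gc g al r] gceq by (auto simp: indicator_def)
    qed
    finally show ?thesis .
  qed
  have rhs: "(LINT \<tau>|lborel. LINT t|lborel. F t \<tau>) = integral {a..b} (\<lambda>\<tau>. g \<tau> * kat_right_int b al r f \<tau>)"
  proof -
    have "(LINT \<tau>|lborel. LINT t|lborel. F t \<tau>) = (LINT \<tau>|lborel. (if a \<le> \<tau> \<and> \<tau> \<le> b then gc \<tau> * integral {\<tau>..b} (\<lambda>t. kk al r t \<tau> * fc t) else 0))"
      using itau by simp
    also have "\<dots> = integral {a..b} (\<lambda>\<tau>. g \<tau> * kat_right_int b al r f \<tau>)"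
    proof (rule lint_indicator_eq(1))
      show "continuous_on {a..b} (\<lambda>\<tau>. g \<tau> * kat_right_int b al r f \<tau>)" by (intro continuous_intros g K)
      fix \<tau>
      have "integral {\<tau>..b} (\<lambda>t. kk al r t \<tau> * fc t) = kat_right_int b al r f \<tau>" if "a \<le> \<tau>"
        unfolding kat_right_int_def kk_def using that fceq by (intro integral_cong) auto
      then show "(if a \<le> \<tau> \<and> \<tau> \<le> b then gc \<tau> * integral {\<tau>..b} (\<lambda>t. kk al r t \<tau> * fc t) else 0)
          = indicator {a..b} \<tau> *\<^sub>R (g \<tau> * kat_right_int b al r f \<tau>)"
        using gceq[of \<tau>] by (auto simp: indicator_def)
    qed
    finally show ?thesis .
  qed
  show ?thesis using fub lhs rhs by simp
qed

lemma min_deriv_zero: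
  fixes J :: "real \<Rightarrow> real"
  assumes lim: "((\<lambda>y. (J y - J y0) / (y - y0)) \<longlongrightarrow> D) (at y0)"
    and ev: "\<forall>\<^sub>F y in at y0. J y0 \<le> J y"
  shows "D = 0"
proof -
  have limr: "((\<lambda>y. (J y - J y0) / (y - y0)) \<longlongrightarrow> D) (at_right y0)"
    using lim by (rule tendsto_within_subset) simp
  have liml: "((\<lambda>y. (J y - J y0) / (y - y0)) \<longlongrightarrow> D) (at_left y0)"
    using lim by (rule tendsto_within_subset) simp
  have evr: "\<forall>\<^sub>F y in at_right y0. J y0 \<le> J y"
    using filter_leD[OF at_le[of "{y0<..}" UNIV y0] ev] by simp
  have evl: "\<forall>\<^sub>F y in at_left y0. J y0 \<le> J y"
    using filter_leD[OF at_le[of "{..<y0}" UNIV y0] ev] by simp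
  have "\<forall>\<^sub>F y in at_right y0. 0 \<le> (J y - J y0) / (y - y0)"
    using evr eventually_at_right_less[of y0] by eventually_elim auto
  then have "0 \<le> D" using tendsto_lowerbound[OF limr] trivial_limit_at_right_real by blast
  moreover have "\<forall>\<^sub>F y in at_left y0. (J y - J y0) / (y - y0) \<le> 0"
  proof -
    have lt: "\<forall>\<^sub>F y in at_left y0. y < y0"
      using eventually_at_left_real[of "y0 - 1" y0] by (auto elim: eventually_mono)
    show ?thesis using evl lt by eventually_elim (auto simp: divide_nonneg_neg)
  qed
  then have "D \<le> 0" using tendsto_upperbound[OF liml] trivial_limit_at_left_real by blast
  ultimately show ?thesis by simp
qed

lemma deriv_bound_1d:
  fixes f f' :: "real \<Rightarrow> real"
  assumes "\<And>u. u \<in> {lo..hi} \<Longrightarrow> (f has_real_derivative f' u) (at u)"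
    and "\<And>u. u \<in> {lo..hi} \<Longrightarrow> \<bar>f' u\<bar> \<le> B"
    and "u1 \<in> {lo..hi}" "u0 \<in> {lo..hi}"
  shows "\<bar>f u1 - f u0\<bar> \<le> B * \<bar>u1 - u0\<bar>"
proof -
  have "norm (f u1 - f u0) \<le> B * norm (u1 - u0)"
    by (rule field_differentiable_bound[where S="{lo..hi}" and f'=f'])
       (use assms in \<open>auto intro: has_field_derivative_at_within\<close>)
  then show ?thesis by simp
qed

lemma cont_bound3:
  fixes P :: "real \<Rightarrow> real \<Rightarrow> real \<Rightarrow> real"
  assumes "continuous_on ({a..b} \<times> UNIV) (\<lambda>(t, y, z). P t y z)"
  obtains B where "0 \<le> B" "\<And>t y z. t \<in> {a..b} \<Longrightarrow> \<bar>y\<bar> \<le> Y \<Longrightarrow> \<bar>z\<bar> \<le> Z \<Longrightarrow> \<bar>P t y z\<bar> \<le> B"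
proof -
  let ?S = "{a..b} \<times> ({-Y..Y} \<times> {-Z..Z})"
  have "compact ?S" by (intro compact_Times) auto
  moreover have "continuous_on ?S (\<lambda>(t, y, z). P t y z)"
    by (rule continuous_on_subset[OF assms]) auto
  ultimately have "bounded ((\<lambda>(t, y, z). P t y z) ` ?S)"
    by (intro compact_imp_bounded compact_continuous_image)
  then obtain B where B: "\<forall>w\<in>(\<lambda>(t, y, z). P t y z) ` ?S. norm w \<le> B" by (auto simp: bounded_iff)
  have "\<bar>P t y z\<bar> \<le> max 0 B" if "t \<in> {a..b}" "\<bar>y\<bar> \<le> Y" "\<bar>z\<bar> \<le> Z" for t y z
  proof -
    have "(t, y, z) \<in> ?S" using that by auto
    then have "norm (P t y z) \<le> B" using B by force
    then show ?thesis by simp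
  qed
  then show ?thesis using that[of "max 0 B"] by simp
qed

lemma partial_limit:
  fixes F F2 :: "real \<Rightarrow> real \<Rightarrow> real" and Z :: "real \<Rightarrow> real"
  assumes diff: "\<And>u z. ((\<lambda>u. F u z) has_real_derivative F2 u z) (at u)"
    and cont: "\<And>e. e > 0 \<Longrightarrow> \<exists>k>0. \<forall>u z. \<bar>u - u0\<bar> < k \<and> \<bar>z - z0\<bar> < k \<longrightarrow> \<bar>F2 u z - F2 u0 z0\<bar> < e"
    and zlim: "(Z \<longlongrightarrow> z0) (at 0)"
  shows "((\<lambda>\<epsilon>. (F (u0 + \<epsilon> * h) (Z \<epsilon>) - F u0 (Z \<epsilon>)) / \<epsilon>) \<longlongrightarrow> F2 u0 z0 * h) (at 0)"
  unfolding tendsto_iff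
proof (intro allI impI)
  fix e :: real assume e: "e > 0"
  define e' where "e' = e / (\<bar>h\<bar> + 1)"
  have e': "e' > 0" "e' * \<bar>h\<bar> < e" using e unfolding e'_def by (auto simp: field_simps)
  obtain k where k: "k > 0" "\<And>u z. \<bar>u - u0\<bar> < k \<Longrightarrow> \<bar>z - z0\<bar> < k \<Longrightarrow> \<bar>F2 u z - F2 u0 z0\<bar> < e'"
    using cont[OF e'(1)] by blast
  have ev1: "\<forall>\<^sub>F \<epsilon> in at 0. \<bar>Z \<epsilon> - z0\<bar> < k"
    using zlim k(1) unfolding tendsto_iff dist_real_def by blast
  have "((\<lambda>\<epsilon>. \<epsilon> * h) \<longlongrightarrow> 0 * h) (at (0::real))" by (intro tendsto_intros)
  then have ev2: "\<forall>\<^sub>F \<epsilon> in at 0. \<bar>\<epsilon> * h\<bar> < k"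
    using k(1) unfolding tendsto_iff dist_real_def by force
  have ev3: "\<forall>\<^sub>F \<epsilon> in at (0::real). \<epsilon> \<noteq> 0" by (simp add: eventually_at_filter)
  show "\<forall>\<^sub>F \<epsilon> in at 0. dist ((F (u0 + \<epsilon> * h) (Z \<epsilon>) - F u0 (Z \<epsilon>)) / \<epsilon>) (F2 u0 z0 * h) < e"
    using ev1 ev2 ev3
  proof eventually_elim
    case (elim \<epsilon>)
    define lo where "lo = min u0 (u0 + \<epsilon> * h)"
    define hi where "hi = max u0 (u0 + \<epsilon> * h)"
    let ?g = "\<lambda>u. F u (Z \<epsilon>) - F2 u0 z0 * u"
    have "\<bar>?g (u0 + \<epsilon> * h) - ?g u0\<bar> \<le> e' * \<bar>(u0 + \<epsilon> * h) - u0\<bar>"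
    proof (rule deriv_bound_1d[where lo=lo and hi=hi and f'="\<lambda>u. F2 u (Z \<epsilon>) - F2 u0 z0"])
      fix u assume u: "u \<in> {lo..hi}"
      show "(?g has_real_derivative F2 u (Z \<epsilon>) - F2 u0 z0) (at u)"
      proof -
        have d: "((\<lambda>u. F u (Z \<epsilon>)) has_real_derivative F2 u (Z \<epsilon>)) (at u)" by (rule diff)
        show ?thesis using d by (auto intro!: derivative_eq_intros)
      qed
      have "\<bar>u - u0\<bar> \<le> \<bar>\<epsilon> * h\<bar>" using u unfolding lo_def hi_def by auto
      then have "\<bar>u - u0\<bar> < k" using elim by linarith
      then show "\<bar>F2 u (Z \<epsilon>) - F2 u0 z0\<bar> \<le> e'" using k(2) elim by (meson less_imp_le)
    qed (auto simp: lo_def hi_def)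
    then have "\<bar>F (u0 + \<epsilon> * h) (Z \<epsilon>) - F u0 (Z \<epsilon>) - F2 u0 z0 * (\<epsilon> * h)\<bar> \<le> e' * \<bar>\<epsilon>\<bar> * \<bar>h\<bar>"
      by (simp add: algebra_simps abs_mult)
    then have "\<bar>(F (u0 + \<epsilon> * h) (Z \<epsilon>) - F u0 (Z \<epsilon>) - F2 u0 z0 * (\<epsilon> * h)) / \<epsilon>\<bar> \<le> e' * \<bar>h\<bar>"
      using elim by (simp add: abs_divide divide_simps mult_ac)
    moreover have "(F (u0 + \<epsilon> * h) (Z \<epsilon>) - F u0 (Z \<epsilon>) - F2 u0 z0 * (\<epsilon> * h)) / \<epsilon>
        = (F (u0 + \<epsilon> * h) (Z \<epsilon>) - F u0 (Z \<epsilon>)) / \<epsilon> - F2 u0 z0 * h"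
      using elim by (simp add: field_simps)
    ultimately show ?case using e' by (simp add: dist_real_def)
  qed
qed

lemma wsq_deriv: "((\<lambda>w::real. w * \<bar>w\<bar>) has_real_derivative 2 * \<bar>w\<bar>) (at w)"
proof (cases "w = 0")
  case True
  have "((\<lambda>y::real. \<bar>y\<bar>) \<longlongrightarrow> \<bar>0\<bar>) (at 0)" by (intro tendsto_intros)
  then have "((\<lambda>y::real. \<bar>y\<bar>) \<longlongrightarrow> 0) (at 0)" by simp
  moreover have "\<forall>\<^sub>F y in at (0::real). \<bar>y\<bar> = (y * \<bar>y\<bar> - 0 * \<bar>0\<bar>) / (y - 0)"
    by (simp add: eventually_at_filter)
  ultimately have "((\<lambda>y::real. (y * \<bar>y\<bar> - 0 * \<bar>0\<bar>) / (y - 0)) \<longlongrightarrow> 0) (at 0)"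
    by (rule Lim_transform_eventually)
  then show ?thesis using True by (simp add: has_field_derivative_iff)
next
  case False
  show ?thesis
  proof (cases "w > 0")
    case True
    have "((\<lambda>w::real. w * w) has_real_derivative 2 * \<bar>w\<bar>) (at w)"
      using True by (auto intro!: derivative_eq_intros)
    then show ?thesis
      by (rule has_field_derivative_transform_within_open[where S="{0<..}"]) (use True in auto)
  next
    case False
    with \<open>w \<noteq> 0\<close> have neg: "w < 0" by auto
    have "((\<lambda>w::real. - (w * w)) has_real_derivative 2 * \<bar>w\<bar>) (at w)"
      using neg by (auto intro!: derivative_eq_intros)
    then show ?thesis
      by (rule has_field_derivative_transform_within_open[where S="{..<0}"]) (use neg in auto)
  qed
qed

definition eta :: "real \<Rightarrow> real \<Rightarrow> real \<Rightarrow> real" where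
  "eta c d t = (max 0 (d^2 - (t - c)^2))^2"

definition eta' :: "real \<Rightarrow> real \<Rightarrow> real \<Rightarrow> real" where
  "eta' c d t = 2 * max 0 (d^2 - (t - c)^2) * (- 2 * (t - c))"

lemma maxsq: "(max 0 (u::real))^2 = (u^2 + u * \<bar>u\<bar>) / 2"
  by (cases "0 \<le> u") (auto simp: power2_eq_square)

lemma maxlin: "(2 * u * v + 2 * \<bar>u\<bar> * v) / 2 = 2 * max 0 (u::real) * v"
  by (cases "0 \<le> u") auto

lemma eta_alt: "eta c d t = ((d^2 - (t - c)^2)^2 + (d^2 - (t - c)^2) * \<bar>d^2 - (t - c)^2\<bar>) / 2"
  unfolding eta_def by (rule maxsq)

lemma eta_deriv: "(eta c d has_real_derivative eta' c d t) (at t)"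
proof -
  let ?u = "\<lambda>t. d^2 - (t - c)^2"
  have du: "(?u has_real_derivative - (2 * (t - c))) (at t)" by (auto intro!: derivative_eq_intros)
  have d1: "((\<lambda>t. ?u t * \<bar>?u t\<bar>) has_real_derivative 2 * \<bar>?u t\<bar> * - (2 * (t - c))) (at t)"
    using DERIV_chain2[OF wsq_deriv du] .
  have d2: "((\<lambda>t. (?u t)^2) has_real_derivative 2 * ?u t * - (2 * (t - c))) (at t)"
    by (auto intro!: derivative_eq_intros)
  have "((\<lambda>t. ((?u t)^2 + ?u t * \<bar>?u t\<bar>) / 2) has_real_derivative
      (2 * ?u t * - (2 * (t - c)) + 2 * \<bar>?u t\<bar> * - (2 * (t - c))) / 2) (at t)"
    using DERIV_cdivide[OF DERIV_add[OF d2 d1], of 2] .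
  moreover have "(2 * ?u t * - (2 * (t - c)) + 2 * \<bar>?u t\<bar> * - (2 * (t - c))) / 2 = eta' c d t"
    unfolding eta'_def using maxlin[of "?u t" "- (2 * (t - c))"] by simp
  moreover have "(\<lambda>t. ((?u t)^2 + ?u t * \<bar>?u t\<bar>) / 2) = eta c d"
    by (rule ext) (simp add: eta_alt)
  ultimately show ?thesis by simp
qed

lemma eta'_cont: "continuous_on S (eta' c d)"
  unfolding eta'_def by (intro continuous_intros)

lemma eta_cont: "continuous_on S (eta c d)"
  unfolding eta_def by (intro continuous_intros)

lemma eta_zero: "d \<le> \<bar>t - c\<bar> \<Longrightarrow> 0 \<le> d \<Longrightarrow> eta c d t = 0"
proof -
  assume "d \<le> \<bar>t - c\<bar>" "0 \<le> d"
  then have "d^2 \<le> (t - c)^2" by (metis abs_le_square_iff abs_of_nonneg)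
  then show ?thesis unfolding eta_def by simp
qed

lemma eta_nonneg: "0 \<le> eta c d t" unfolding eta_def by simp

lemma eta_center: "eta c d c = d^4" unfolding eta_def by (simp add: max_def power2_eq_square eval_nat_numeral)

lemma eta_bound: "0 \<le> d \<Longrightarrow> \<bar>eta c d t\<bar> \<le> d^4"
proof -
  assume d: "0 \<le> d"
  have "0 \<le> max 0 (d^2 - (t - c)^2)" "max 0 (d^2 - (t - c)^2) \<le> d^2" by auto
  then have "(max 0 (d^2 - (t - c)^2))^2 \<le> (d^2)^2" by (intro power_mono) auto
  then show ?thesis unfolding eta_def by (simp add: power_mult[symmetric])
qed

lemma eta'_bound: "0 \<le> d \<Longrightarrow> \<bar>eta' c d t\<bar> \<le> 4 * d^3"
proof -
  assume d: "0 \<le> d"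
  show ?thesis
  proof (cases "(t - c)^2 < d^2")
    case True
    then have tc: "\<bar>t - c\<bar> \<le> d" using d by (metis abs_le_square_iff abs_of_nonneg less_imp_le)
    have m: "0 \<le> max 0 (d^2 - (t - c)^2)" "max 0 (d^2 - (t - c)^2) \<le> d^2" by auto
    have "eta' c d t = - 4 * (max 0 (d^2 - (t - c)^2) * (t - c))"
      unfolding eta'_def by (simp add: algebra_simps)
    then have "\<bar>eta' c d t\<bar> = 4 * (max 0 (d^2 - (t - c)^2) * \<bar>t - c\<bar>)"
      using m by (simp add: abs_mult)
    also have "\<dots> \<le> 4 * (d^2 * d)" using m tc d by (intro mult_left_mono mult_mono) auto
    finally show ?thesis by (simp add: power3_eq_cube power2_eq_square mult_ac)
  next
    case False
    then show ?thesis unfolding eta'_def using d by simp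
  qed
qed

lemma ibp:
  fixes \<eta> \<eta>' K :: "real \<Rightarrow> real"
  assumes ab: "a \<le> b" and d\<eta>: "\<And>t. (\<eta> has_real_derivative \<eta>' t) (at t)"
    and c\<eta>': "continuous_on {a..b} \<eta>'" and \<eta>a: "\<eta> a = 0" and \<eta>b: "\<eta> b = 0"
    and dK: "\<And>t. t \<in> {a..b} \<Longrightarrow> K differentiable (at t within {a..b})"
    and cK': "continuous_on {a..b} (\<lambda>t. vector_derivative K (at t within {a..b}))"
  shows "integral {a..b} (\<lambda>t. \<eta>' t * K t) = - integral {a..b} (\<lambda>t. \<eta> t * vector_derivative K (at t within {a..b}))"
proof -
  define K' where "K' t = vector_derivative K (at t within {a..b})" for t
  have dK': "(K has_real_derivative K' t) (at t within {a..b})" if "t \<in> {a..b}" for t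
    using dK[OF that] unfolding K'_def vector_derivative_works has_real_derivative_iff_has_vector_derivative .
  have cK: "continuous_on {a..b} K"
    using dK by (auto simp: continuous_on_eq_continuous_within intro: differentiable_imp_continuous_within)
  have c\<eta>: "continuous_on {a..b} \<eta>"
    using d\<eta> by (intro continuous_at_imp_continuous_on) (auto intro: DERIV_isCont)
  have "((\<lambda>t. \<eta>' t * K t + K' t * \<eta> t) has_integral (\<eta> b * K b - \<eta> a * K a)) {a..b}"
  proof (rule fundamental_theorem_of_calculus[OF ab])
    fix t assume t: "t \<in> {a..b}"
    have "((\<lambda>t. \<eta> t * K t) has_real_derivative \<eta>' t * K t + K' t * \<eta> t) (at t within {a..b})"
      by (rule DERIV_mult[OF has_field_derivative_at_within[OF d\<eta>] dK'[OF t]])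
    then show "((\<lambda>t. \<eta> t * K t) has_vector_derivative \<eta>' t * K t + K' t * \<eta> t) (at t within {a..b})"
      by (simp add: has_real_derivative_iff_has_vector_derivative)
  qed
  then have "integral {a..b} (\<lambda>t. \<eta>' t * K t + K' t * \<eta> t) = 0"
    using \<eta>a \<eta>b by (simp add: integral_unique)
  moreover have "integral {a..b} (\<lambda>t. \<eta>' t * K t + K' t * \<eta> t) =
      integral {a..b} (\<lambda>t. \<eta>' t * K t) + integral {a..b} (\<lambda>t. \<eta> t * K' t)"
  proof -
    have i1: "(\<lambda>t. \<eta>' t * K t) integrable_on {a..b}"
      by (intro integrable_continuous_interval continuous_intros c\<eta>' cK)
    have i2: "(\<lambda>t. \<eta> t * K' t) integrable_on {a..b}"
      using cK' unfolding K'_def[symmetric] by (intro integrable_continuous_interval continuous_intros c\<eta>)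
    show ?thesis using integral_add[OF i1 i2] by (simp add: mult.commute)
  qed
  ultimately show ?thesis unfolding K'_def by simp
qed

lemma fund_lemma:
  fixes h :: "real \<Rightarrow> real"
  assumes ab: "a < b" and hc: "continuous_on {a..b} h"
    and z: "\<And>c d. 0 < d \<Longrightarrow> a \<le> c - d \<Longrightarrow> c + d \<le> b \<Longrightarrow> integral {a..b} (\<lambda>t. h t * eta c d t) = 0"
  shows "\<forall>t\<in>{a..b}. h t = 0"
proof (rule ccontr)
  assume "\<not> (\<forall>t\<in>{a..b}. h t = 0)"
  then obtain t0 where t0: "t0 \<in> {a..b}" "h t0 \<noteq> 0" by auto
  define s where "s = sgn (h t0)"
  have s: "s * h t0 = \<bar>h t0\<bar>" "\<bar>s\<bar> = 1" "s \<noteq> 0" using t0 unfolding s_def by (auto simp: sgn_if)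
  have pos: "0 < \<bar>h t0\<bar> / 2" using t0 by simp
  obtain e1 where e1: "e1 > 0" "\<And>t. t \<in> {a..b} \<Longrightarrow> dist t t0 < e1 \<Longrightarrow> dist (h t) (h t0) < \<bar>h t0\<bar> / 2"
    using hc t0(1) pos unfolding continuous_on_iff by metis
  have hpos: "0 < s * h t" if "t \<in> {a..b}" "\<bar>t - t0\<bar> < e1" for t
  proof -
    have "\<bar>h t - h t0\<bar> < \<bar>h t0\<bar> / 2" using e1(2)[OF that(1)] that(2) by (simp add: dist_real_def)
    moreover have "\<bar>s * h t - s * h t0\<bar> = \<bar>h t - h t0\<bar>"
      using s(2) by (simp add: right_diff_distrib[symmetric] abs_mult)
    ultimately show ?thesis using s(1) by linarith
  qed
  define d where "d = min (e1 / 3) ((b - a) / 4)"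
  have d: "0 < d" "d \<le> e1 / 3" "d \<le> (b - a) / 4" using e1 ab unfolding d_def by (auto simp: min_def)
  define c where "c = max (a + d) (min (b - d) t0)"
  have c: "a \<le> c - d" "c + d \<le> b" "\<bar>c - t0\<bar> \<le> d" using d t0 unfolding c_def by auto
  define \<phi> where "\<phi> t = s * h t * eta c d t" for t
  have \<phi>nn: "0 \<le> \<phi> t" if "t \<in> {a..b}" for t
  proof (cases "\<bar>t - c\<bar> < d")
    case True
    then have "\<bar>t - t0\<bar> < e1" using c d by linarith
    then have "0 < s * h t" using hpos that by blast
    then show ?thesis unfolding \<phi>_def using eta_nonneg by simp
  next
    case False
    then show ?thesis unfolding \<phi>_def using eta_zero[of d t c] d by simp
  qed
  have \<phi>c: "continuous_on {a..b} \<phi>" unfolding \<phi>_def by (intro continuous_intros hc eta_cont)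
  have "integral {a..b} \<phi> = s * integral {a..b} (\<lambda>t. h t * eta c d t)"
    unfolding \<phi>_def by (simp add: mult.assoc)
  also have "\<dots> = 0" using z[OF d(1) c(1) c(2)] by simp
  finally have "\<forall>t\<in>{a..b}. \<phi> t = 0" using integral_eq_0_iff[OF \<phi>c ab] \<phi>nn by blast
  moreover have "c \<in> {a..b}" using c d by auto
  moreover have "0 < \<phi> c"
  proof -
    have "0 < s * h c" using hpos[of c] c d \<open>c \<in> {a..b}\<close> by auto
    moreover have "0 < eta c d c" using d by (simp add: eta_center)
    ultimately show ?thesis unfolding \<phi>_def by simp
  qed
  ultimately show False by auto
qed

lemma C1_facts:
  assumes "C1_on a b x" "a < b"
  shows "continuous_on {a..b} (dC1 a b x)" "continuous_on {a..b} x"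
    "\<And>t. t \<in> {a..b} \<Longrightarrow> (x has_vector_derivative dC1 a b x t) (at t within {a..b})"
proof -
  obtain D where D: "\<forall>t\<in>{a..b}. (x has_vector_derivative D t) (at t within {a..b})" "continuous_on {a..b} D"
    using assms(1) unfolding C1_on_def by blast
  have eq: "dC1 a b x t = D t" if "t \<in> {a..b}" for t
    unfolding dC1_def using vector_derivative_within_cbox[of a b t x "D t"] D(1) that assms(2)
    by (simp add: cbox_interval)
  show "continuous_on {a..b} (dC1 a b x)" using continuous_on_eq[OF D(2), of "dC1 a b x"] eq by simp
  show hv: "\<And>t. t \<in> {a..b} \<Longrightarrow> (x has_vector_derivative dC1 a b x t) (at t within {a..b})"
    using D(1) eq by simp
  show "continuous_on {a..b} x"
    unfolding continuous_on_eq_continuous_within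
    using differentiable_imp_continuous_within[OF differentiableI_vector[OF hv]] by blast
qed

lemma caputo_eq: "caputo_kat a b al r x t = r powr al / Gamma (1 - al) * Iop al r (dC1 a b x) a t"
  unfolding caputo_kat_def Iop_def kk_def ..

lemma L_comp_cont:
  fixes L :: "real \<Rightarrow> real \<Rightarrow> real \<Rightarrow> real"
  assumes L: "continuous_on ({a..b} \<times> UNIV) (\<lambda>(t, y, z). L t y z)"
    and u: "continuous_on {a..b} u" and v: "continuous_on {a..b} v"
  shows "continuous_on {a..b} (\<lambda>t. L t (u t) (v t))"
proof -
  have "continuous_on {a..b} (\<lambda>t. (\<lambda>(t, y, z). L t y z) (t, u t, v t))"
    by (rule continuous_on_compose2[OF L]) (auto intro!: continuous_intros u v)
  then show ?thesis by simp
qed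

lemma Iop_lin:
  fixes a t al r :: real
  assumes "(\<lambda>\<tau>. kk al r t \<tau> * g1 \<tau>) integrable_on {a..t}" "(\<lambda>\<tau>. kk al r t \<tau> * g2 \<tau>) integrable_on {a..t}"
  shows "Iop al r (\<lambda>\<tau>. g1 \<tau> + e * g2 \<tau>) a t = Iop al r g1 a t + e * Iop al r g2 a t"
proof -
  have "(\<lambda>\<tau>. kk al r t \<tau> * (g1 \<tau> + e * g2 \<tau>)) = (\<lambda>\<tau>. kk al r t \<tau> * g1 \<tau> + e * (kk al r t \<tau> * g2 \<tau>))"
    by (simp add: algebra_simps)
  moreover have i2: "(\<lambda>\<tau>. e * (kk al r t \<tau> * g2 \<tau>)) integrable_on {a..t}"
    using integrable_on_cmult_left[OF assms(2), of e] by simp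
  ultimately show ?thesis unfolding Iop_def using integral_add[OF assms(1) i2] by simp
qed

lemma L_lip_z:
  fixes L :: "real \<Rightarrow> real \<Rightarrow> real \<Rightarrow> real"
  assumes d3: "\<And>z. (\<lambda>z'. L t y z') differentiable (at z)"
    and P: "\<And>z. \<bar>z\<bar> \<le> Z \<Longrightarrow> \<bar>partial3 L t y z\<bar> \<le> P"
    and "\<bar>z1\<bar> \<le> Z" "\<bar>z0\<bar> \<le> Z"
  shows "\<bar>L t y z1 - L t y z0\<bar> \<le> P * \<bar>z1 - z0\<bar>"
proof (rule deriv_bound_1d[where lo="-Z" and hi=Z and f'="\<lambda>z. partial3 L t y z"])
  fix z assume "z \<in> {-Z..Z}"
  show "((\<lambda>z. L t y z) has_real_derivative partial3 L t y z) (at z)"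
    unfolding partial3_def using d3 by (simp add: DERIV_deriv_iff_real_differentiable)
  show "\<bar>partial3 L t y z\<bar> \<le> P" using P \<open>z \<in> {-Z..Z}\<close> by auto
qed (use assms in auto)

lemma L_lip_y:
  fixes L :: "real \<Rightarrow> real \<Rightarrow> real \<Rightarrow> real"
  assumes d2: "\<And>y. (\<lambda>y'. L t y' z) differentiable (at y)"
    and P: "\<And>y. \<bar>y\<bar> \<le> Y \<Longrightarrow> \<bar>partial2 L t y z\<bar> \<le> P"
    and "\<bar>y1\<bar> \<le> Y" "\<bar>y0\<bar> \<le> Y"
  shows "\<bar>L t y1 z - L t y0 z\<bar> \<le> P * \<bar>y1 - y0\<bar>"
proof (rule deriv_bound_1d[where lo="-Y" and hi=Y and f'="\<lambda>y. partial2 L t y z"])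
  fix y assume "y \<in> {-Y..Y}"
  show "((\<lambda>y. L t y z) has_real_derivative partial2 L t y z) (at y)"
    unfolding partial2_def using d2 by (simp add: DERIV_deriv_iff_real_differentiable)
  show "\<bar>partial2 L t y z\<bar> \<le> P" using P \<open>y \<in> {-Y..Y}\<close> by auto
qed (use assms in auto)

lemma Iop_bound_uniform:
  fixes a b t r r1 r2 al G :: real and g :: "real \<Rightarrow> real"
  assumes ab: "0 < a" "a \<le> t" "t \<le> b" and al: "0 < al" "al < 1"
    and r: "0 < r1" "r1 \<le> r" "r \<le> r2"
    and g: "continuous_on {a..b} g" and G: "0 \<le> G" "\<And>\<tau>. \<tau> \<in> {a..b} \<Longrightarrow> \<bar>g \<tau>\<bar> \<le> G"
  shows "\<bar>Iop al r g a t\<bar> \<le> G * mlo a b r1 r2 powr (- al) * ((b - a) powr (1 - al) / (1 - al))"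
proof -
  have "\<bar>Iop al r g a t\<bar> \<le> G * mlo a b r1 r2 powr (- al) * ((t - a) powr (1 - al) / (1 - al))"
    using kk_int(2)[OF ab al r g G(2)] unfolding Iop_def .
  also have "\<dots> \<le> G * mlo a b r1 r2 powr (- al) * ((b - a) powr (1 - al) / (1 - al))"
  proof -
    have "(t - a) powr (1 - al) \<le> (b - a) powr (1 - al)" using ab al by (intro powr_mono2) auto
    then have "(t - a) powr (1 - al) / (1 - al) \<le> (b - a) powr (1 - al) / (1 - al)"
      using al by (intro divide_right_mono) auto
    then show ?thesis using G by (intro mult_left_mono) auto
  qed
  finally show ?thesis .
qed

lemma part2:
  fixes a b alpha rho :: real and L :: "real \<Rightarrow> real \<Rightarrow> real \<Rightarrow> real" and x :: "real \<Rightarrow> real"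
  assumes ab: "0 < a" "a < b" and alpha: "0 < alpha" "alpha < 1"
    and L_cont: "continuous_on ({a..b} \<times> UNIV) (\<lambda>(t, y, z). L t y z)"
    and L_d3: "\<And>t y z. t \<in> {a..b} \<Longrightarrow> (\<lambda>z'. L t y z') differentiable (at z)"
    and L_d3_cont: "continuous_on ({a..b} \<times> UNIV) (\<lambda>(t, y, z). partial3 L t y z)"
    and xC: "C1_on a b x" and rho: "0 < rho"
    and min: "\<exists>\<delta>>0. \<forall>r. 0 < r \<and> \<bar>r - rho\<bar> < \<delta> \<longrightarrow> Jfun a b alpha L x rho \<le> Jfun a b alpha L x r"
  shows "integral {a..b} (\<lambda>t. partial3 L t (x t) (caputo_kat a b alpha rho x t)
            * deriv (\<lambda>r. caputo_kat a b alpha r x t) rho) = 0"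
proof -
  define x' where "x' = dC1 a b x"
  have x'c: "continuous_on {a..b} x'" and xc: "continuous_on {a..b} x"
    using C1_facts[OF xC ab(2)] unfolding x'_def by auto
  obtain Gx where Gx: "0 \<le> Gx" "\<And>\<tau>. \<tau> \<in> {a..b} \<Longrightarrow> \<bar>x' \<tau>\<bar> \<le> Gx" using cont_bound[OF x'c] by blast
  obtain X where X: "0 \<le> X" "\<And>\<tau>. \<tau> \<in> {a..b} \<Longrightarrow> \<bar>x \<tau>\<bar> \<le> X" using cont_bound[OF xc] by blast
  define cG where "cG = Gamma (1 - alpha)"
  have cG: "0 < cG" unfolding cG_def using alpha by (intro Gamma_real_pos) simp
  define c where "c r = r powr alpha / cG" for r
  define r1 where "r1 = rho / 2"
  define r2 where "r2 = 2 * rho"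
  have r12: "0 < r1" "r1 < rho" "rho < r2" using rho by (auto simp: r1_def r2_def)
  define IB where "IB = Gx * mlo a b r1 r2 powr (- alpha) * ((b - a) powr (1 - alpha) / (1 - alpha))"
  have IB0: "0 \<le> IB" unfolding IB_def using Gx alpha by simp
  have psi: "caputo_kat a b alpha r x t = c r * Iop alpha r x' a t" for r t
    unfolding caputo_eq c_def cG_def x'_def ..
  have Ib: "\<bar>Iop alpha r x' a t\<bar> \<le> IB" if "t \<in> {a..b}" "r1 \<le> r" "r \<le> r2" for r t
    using Iop_bound_uniform[of a t b alpha r1 r r2 x' Gx] that ab alpha r12 x'c Gx unfolding IB_def by auto
  have c0: "0 \<le> c r" for r unfolding c_def using cG by simp
  have cmono: "c r \<le> c r2" if "0 < r" "r \<le> r2" for r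
    unfolding c_def using that alpha cG by (intro divide_right_mono powr_mono2) auto
  define Z0 where "Z0 = c r2 * IB"
  have psib: "\<bar>caputo_kat a b alpha r x t\<bar> \<le> Z0" if "t \<in> {a..b}" "r1 \<le> r" "r \<le> r2" for r t
  proof -
    have "\<bar>caputo_kat a b alpha r x t\<bar> = c r * \<bar>Iop alpha r x' a t\<bar>" unfolding psi using c0 by (simp add: abs_mult)
    also have "\<dots> \<le> c r2 * IB" using cmono[of r] Ib[OF that] that r12 c0 IB0 by (intro mult_mono) auto
    finally show ?thesis unfolding Z0_def .
  qed
  define LI where "LI = Ck alpha a b r1 r2 * Gx * ((b - a) powr (1 - alpha) / (1 - alpha))"
  have Ilip: "\<bar>Iop alpha r x' a t - Iop alpha rho x' a t\<bar> \<le> LI * \<bar>r - rho\<bar>"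
    if "t \<in> {a..b}" "r1 \<le> r" "r \<le> r2" for r t
    using Iop_lip[of a t b alpha r1 r r2 rho x' Gx] that ab alpha r12 x'c Gx unfolding LI_def by auto
  define Lc where "Lc = alpha * r1 powr (alpha - 1) / cG"
  have clip: "\<bar>c r - c rho\<bar> \<le> Lc * \<bar>r - rho\<bar>" if "r1 \<le> r" "r \<le> r2" for r
  proof (rule deriv_bound_1d[where lo=r1 and hi=r2 and f'="\<lambda>u. alpha * u powr (alpha - 1) / cG"])
    fix u assume u: "u \<in> {r1..r2}"
    then have up: "0 < u" using r12 by auto
    show "(c has_real_derivative alpha * u powr (alpha - 1) / cG) (at u)"
      unfolding c_def using DERIV_cdivide[OF has_real_derivative_powr[OF up, of alpha], of cG] by simp
    have "u powr (alpha - 1) \<le> r1 powr (alpha - 1)" using u r12 alpha by (intro powr_mono2') auto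
    then have "alpha * u powr (alpha - 1) / cG \<le> alpha * r1 powr (alpha - 1) / cG"
      using alpha cG by (intro divide_right_mono mult_left_mono) auto
    then show "\<bar>alpha * u powr (alpha - 1) / cG\<bar> \<le> Lc" unfolding Lc_def using alpha cG by simp
  qed (use that r12 in auto)
  define L\<psi> where "L\<psi> = c r2 * LI + Lc * IB"
  have psilip: "\<bar>caputo_kat a b alpha r x t - caputo_kat a b alpha rho x t\<bar> \<le> L\<psi> * \<bar>r - rho\<bar>"
    if "t \<in> {a..b}" "r1 \<le> r" "r \<le> r2" for r t
  proof -
    have "caputo_kat a b alpha r x t - caputo_kat a b alpha rho x t
        = c r * (Iop alpha r x' a t - Iop alpha rho x' a t) + (c r - c rho) * Iop alpha rho x' a t"
      unfolding psi by (simp add: algebra_simps)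
    also have "\<bar>\<dots>\<bar> \<le> c r * \<bar>Iop alpha r x' a t - Iop alpha rho x' a t\<bar> + \<bar>c r - c rho\<bar> * \<bar>Iop alpha rho x' a t\<bar>"
      using c0[of r] by (intro order_trans[OF abs_triangle_ineq]) (simp add: abs_mult)
    also have "\<dots> \<le> c r2 * (LI * \<bar>r - rho\<bar>) + (Lc * \<bar>r - rho\<bar>) * IB"
    proof (rule add_mono)
      show "c r * \<bar>Iop alpha r x' a t - Iop alpha rho x' a t\<bar> \<le> c r2 * (LI * \<bar>r - rho\<bar>)"
        using cmono[of r] Ilip[OF that] that r12 c0[of r] by (intro mult_mono) auto
      show "\<bar>c r - c rho\<bar> * \<bar>Iop alpha rho x' a t\<bar> \<le> Lc * \<bar>r - rho\<bar> * IB"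
        using clip[OF that(2,3)] Ib[OF that(1), of rho] r12 by (intro mult_mono) (auto simp: Lc_def)
    qed
    also have "\<dots> = L\<psi> * \<bar>r - rho\<bar>" unfolding L\<psi>_def by (simp add: algebra_simps)
    finally show ?thesis .
  qed
  obtain P3 where P3: "0 \<le> P3" "\<And>t y z. t \<in> {a..b} \<Longrightarrow> \<bar>y\<bar> \<le> X \<Longrightarrow> \<bar>z\<bar> \<le> Z0 \<Longrightarrow> \<bar>partial3 L t y z\<bar> \<le> P3"
    using cont_bound3[OF L_d3_cont] by blast
  have Lz: "\<bar>L t (x t) z1 - L t (x t) z0\<bar> \<le> P3 * \<bar>z1 - z0\<bar>"
    if "t \<in> {a..b}" "\<bar>z1\<bar> \<le> Z0" "\<bar>z0\<bar> \<le> Z0" for t z1 z0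
    by (rule L_lip_z[where Z=Z0]) (use that L_d3 P3 X in auto)
  define Q where "Q r t = (L t (x t) (caputo_kat a b alpha r x t) - L t (x t) (caputo_kat a b alpha rho x t)) / (r - rho)" for r t
  have Lcont: "continuous_on {a..b} (\<lambda>t. L t (x t) (caputo_kat a b alpha r x t))" if "0 < r" for r
  proof -
    have "continuous_on {a..b} (\<lambda>t. c r * Iop alpha r x' a t)"
      using Iop_cont[of a b alpha r x'] ab alpha that x'c by (intro continuous_intros) auto
    then show ?thesis unfolding psi by (rule L_comp_cont[OF L_cont xc])
  qed
  have Qint: "Q r integrable_on {a..b} \<and> integral {a..b} (Q r) = (Jfun a b alpha L x r - Jfun a b alpha L x rho) / (r - rho)"
    if "0 < r" for r
  proof -
    have eq: "Q r = (\<lambda>t. (L t (x t) (caputo_kat a b alpha r x t) - L t (x t) (caputo_kat a b alpha rho x t)) * inverse (r - rho))"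
      unfolding Q_def by (simp add: divide_inverse)
    have i1: "(\<lambda>t. L t (x t) (caputo_kat a b alpha r x t)) integrable_on {a..b}"
      using Lcont[OF that] by (rule integrable_continuous_interval)
    have i2: "(\<lambda>t. L t (x t) (caputo_kat a b alpha rho x t)) integrable_on {a..b}"
      using Lcont[OF rho] by (rule integrable_continuous_interval)
    have "Q r integrable_on {a..b}" unfolding eq using integrable_on_cmult_right[OF integrable_diff[OF i1 i2], of "inverse (r - rho)"]
      by simp
    moreover have "integral {a..b} (Q r) = (Jfun a b alpha L x r - Jfun a b alpha L x rho) / (r - rho)"
      unfolding eq Jfun_def using integral_diff[OF i1 i2] by (simp add: divide_inverse)
    ultimately show ?thesis by simp
  qed
  have Qb: "\<bar>Q r t\<bar> \<le> P3 * L\<psi>" if "t \<in> {a..b}" "r1 \<le> r" "r \<le> r2" "r \<noteq> rho" for r t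
  proof -
    have "\<bar>L t (x t) (caputo_kat a b alpha r x t) - L t (x t) (caputo_kat a b alpha rho x t)\<bar>
        \<le> P3 * \<bar>caputo_kat a b alpha r x t - caputo_kat a b alpha rho x t\<bar>"
      using psib[OF that(1-3)] psib[OF that(1), of rho] r12 that by (intro Lz) auto
    also have "\<dots> \<le> P3 * (L\<psi> * \<bar>r - rho\<bar>)" using psilip[OF that(1-3)] P3 by (intro mult_left_mono) auto
    finally have "\<bar>L t (x t) (caputo_kat a b alpha r x t) - L t (x t) (caputo_kat a b alpha rho x t)\<bar> / \<bar>r - rho\<bar> \<le> P3 * L\<psi>"
      using that by (simp add: divide_simps mult_ac)
    then show ?thesis unfolding Q_def by (simp add: abs_divide)
  qed
  have dpsi: "((\<lambda>r. caputo_kat a b alpha r x t) has_real_derivative deriv (\<lambda>r. caputo_kat a b alpha r x t) rho) (at rho)"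
    if "t \<in> {a..b}" for t
  proof -
    have feq: "(\<lambda>r. caputo_kat a b alpha r x t) = (\<lambda>r. c r * Iop alpha r x' a t)" by (rule ext) (rule psi)
    have dc: "(c has_real_derivative alpha * rho powr (alpha - 1) / cG) (at rho)"
      unfolding c_def using DERIV_cdivide[OF has_real_derivative_powr[OF rho, of alpha], of cG] by simp
    have dI: "((\<lambda>r. Iop alpha r x' a t) has_real_derivative integral {a..t} (\<lambda>\<tau>. Dk alpha rho t \<tau> * x' \<tau>)) (at rho)"
      using Iop_deriv[of a t b alpha rho x'] that ab alpha rho x'c by auto
    have "(\<lambda>r. c r * Iop alpha r x' a t) differentiable (at rho)"
      using DERIV_mult[OF dc dI] real_differentiable_def by blast
    then show ?thesis unfolding feq by (simp add: DERIV_deriv_iff_real_differentiable)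
  qed
  have lim: "((\<lambda>r. Q r t) \<longlongrightarrow> partial3 L t (x t) (caputo_kat a b alpha rho x t) * deriv (\<lambda>r. caputo_kat a b alpha r x t) rho) (at rho)"
    if "t \<in> {a..b}" for t
  proof -
    have dL: "((\<lambda>z. L t (x t) z) has_real_derivative partial3 L t (x t) (caputo_kat a b alpha rho x t)) (at (caputo_kat a b alpha rho x t))"
      unfolding partial3_def using L_d3[OF that] by (simp add: DERIV_deriv_iff_real_differentiable)
    have "((\<lambda>r. L t (x t) (caputo_kat a b alpha r x t)) has_real_derivative
        partial3 L t (x t) (caputo_kat a b alpha rho x t) * deriv (\<lambda>r. caputo_kat a b alpha r x t) rho) (at rho)"
      using DERIV_chain2[OF dL dpsi[OF that]] .
    then show ?thesis unfolding Q_def by (simp add: has_field_derivative_iff)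
  qed
  have ev_r: "\<forall>\<^sub>F r in at rho. r1 < r \<and> r < r2 \<and> r \<noteq> rho"
  proof -
    have "\<forall>\<^sub>F y in at rho. r1 < y" using order_tendstoD(1)[OF tendsto_ident_at r12(2)] .
    moreover have "\<forall>\<^sub>F y in at rho. y < r2" using order_tendstoD(2)[OF tendsto_ident_at r12(3)] .
    moreover have "\<forall>\<^sub>F y in at rho. y \<noteq> rho" by (simp add: eventually_at_filter)
    ultimately show ?thesis by eventually_elim auto
  qed
  have ev: "\<forall>\<^sub>F r in at rho. Q r integrable_on {a..b} \<and> (\<forall>t\<in>{a..b}. \<bar>Q r t\<bar> \<le> P3 * L\<psi>)"
    using ev_r
  proof eventually_elim
    case (elim r)
    then show ?case using Qint[of r] Qb[of _ r] r12 by auto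
  qed
  have hint: "(\<lambda>t. P3 * L\<psi>) integrable_on {a..b}" by (rule integrable_continuous_interval) (rule continuous_on_const)
  have l1: "((\<lambda>r. integral {a..b} (Q r)) \<longlongrightarrow> integral {a..b} (\<lambda>t. partial3 L t (x t) (caputo_kat a b alpha rho x t)
            * deriv (\<lambda>r. caputo_kat a b alpha r x t) rho)) (at rho)"
    by (rule dct_filter[OF ev hint lim])
  have "\<forall>\<^sub>F r in at rho. integral {a..b} (Q r) = (Jfun a b alpha L x r - Jfun a b alpha L x rho) / (r - rho)"
    using ev_r
  proof eventually_elim
    case (elim r)
    then show ?case using Qint[of r] r12 by auto
  qed
  from Lim_transform_eventually[OF l1 this]
  have l2: "((\<lambda>r. (Jfun a b alpha L x r - Jfun a b alpha L x rho) / (r - rho)) \<longlongrightarrow> integral {a..b} (\<lambda>t. partial3 L t (x t) (caputo_kat a b alpha rho x t)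
            * deriv (\<lambda>r. caputo_kat a b alpha r x t) rho)) (at rho)" .
  obtain \<delta> where \<delta>: "\<delta> > 0" "\<And>r. 0 < r \<Longrightarrow> \<bar>r - rho\<bar> < \<delta> \<Longrightarrow> Jfun a b alpha L x rho \<le> Jfun a b alpha L x r"
    using min by blast
  have evm: "\<forall>\<^sub>F r in at rho. Jfun a b alpha L x rho \<le> Jfun a b alpha L x r"
  proof -
    have "\<forall>\<^sub>F r in at rho. 0 < r \<and> \<bar>r - rho\<bar> < \<delta>"
      unfolding eventually_at
      by (rule exI[of _ "min \<delta> rho"]) (use \<delta>(1) rho in \<open>auto simp: dist_real_def\<close>)
    then show ?thesis by eventually_elim (use \<delta> in auto)
  qed
  show ?thesis by (rule min_deriv_zero[OF l2 evm])
qed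

lemma cont_point_dist:
  fixes f :: "real \<times> real \<times> real \<Rightarrow> real"
  assumes "continuous_on ({a..b} \<times> UNIV) f" "t \<in> {a..b}" "e > 0"
  shows "\<exists>k>0. \<forall>u z. \<bar>u - u0\<bar> < k \<and> \<bar>z - z0\<bar> < k \<longrightarrow> \<bar>f (t, u, z) - f (t, u0, z0)\<bar> < e"
proof -
  have p0: "(t, u0, z0) \<in> {a..b} \<times> UNIV" using assms(2) by simp
  obtain k where k: "k > 0" "\<And>p. p \<in> {a..b} \<times> UNIV \<Longrightarrow> dist p (t, u0, z0) < k \<Longrightarrow> dist (f p) (f (t, u0, z0)) < e"
    using assms(1) p0 assms(3) unfolding continuous_on_iff by metis
  show ?thesis
  proof (intro exI[of _ "k / 2"] conjI allI impI)
    show "0 < k / 2" using k by simp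
    fix u z assume uz: "\<bar>u - u0\<bar> < k / 2 \<and> \<bar>z - z0\<bar> < k / 2"
    have "dist (t, u, z) (t, u0, z0) = sqrt ((u - u0)^2 + (z - z0)^2)"
      by (simp add: dist_Pair_Pair dist_real_def)
    also have "\<dots> \<le> \<bar>u - u0\<bar> + \<bar>z - z0\<bar>" by (rule sqrt_sum_squares_le_sum_abs)
    also have "\<dots> < k" using uz by linarith
    finally have "dist (f (t, u, z)) (f (t, u0, z0)) < e" using k(2) assms(2) by auto
    then show "\<bar>f (t, u, z) - f (t, u0, z0)\<bar> < e" by (simp add: dist_real_def)
  qed
qed

lemma part1:
  fixes a b alpha rho :: real and L :: "real \<Rightarrow> real \<Rightarrow> real \<Rightarrow> real" and x :: "real \<Rightarrow> real"
  assumes ab: "0 < a" "a < b" and alpha: "0 < alpha" "alpha < 1"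
    and L_cont: "continuous_on ({a..b} \<times> UNIV) (\<lambda>(t, y, z). L t y z)"
    and L_d2: "\<And>t y z. t \<in> {a..b} \<Longrightarrow> (\<lambda>y'. L t y' z) differentiable (at y)"
    and L_d3: "\<And>t y z. t \<in> {a..b} \<Longrightarrow> (\<lambda>z'. L t y z') differentiable (at z)"
    and L_d2_cont: "continuous_on ({a..b} \<times> UNIV) (\<lambda>(t, y, z). partial2 L t y z)"
    and L_d3_cont: "continuous_on ({a..b} \<times> UNIV) (\<lambda>(t, y, z). partial3 L t y z)"
    and Kd: "\<forall>t\<in>{a..b}. kat_right_int b alpha rho
              (\<lambda>s. partial3 L s (x s) (caputo_kat a b alpha rho x s)) differentiable (at t within {a..b})"
    and Kc: "continuous_on {a..b}
             (kat_right a b alpha rho (\<lambda>s. partial3 L s (x s) (caputo_kat a b alpha rho x s)))"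
    and xC: "C1_on a b x" and rho: "0 < rho"
    and min: "\<exists>\<delta>>0. \<forall>y. C1_on a b y \<and> y a = x a \<and> y b = x b
         \<and> (\<forall>t\<in>{a..b}. \<bar>y t - x t\<bar> < \<delta> \<and> \<bar>dC1 a b y t - dC1 a b x t\<bar> < \<delta>)
         \<longrightarrow> Jfun a b alpha L x rho \<le> Jfun a b alpha L y rho"
  shows "\<forall>t\<in>{a..b}. partial2 L t (x t) (caputo_kat a b alpha rho x t)
           - kat_right a b alpha rho (\<lambda>s. partial3 L s (x s) (caputo_kat a b alpha rho x s)) t = 0"
proof -
  define fK where "fK = (\<lambda>s. partial3 L s (x s) (caputo_kat a b alpha rho x s))"
  define \<psi> where "\<psi> t = caputo_kat a b alpha rho x t" for t
  define K where "K = kat_right_int b alpha rho fK"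
  have Kd': "\<And>t. t \<in> {a..b} \<Longrightarrow> K differentiable (at t within {a..b})"
    using Kd unfolding fK_def[symmetric] K_def by blast
  have Kc': "continuous_on {a..b} (kat_right a b alpha rho fK)" using Kc unfolding fK_def[symmetric] .
  define x' where "x' = dC1 a b x"
  have x'c: "continuous_on {a..b} x'" and xc: "continuous_on {a..b} x"
    and xd: "\<And>t. t \<in> {a..b} \<Longrightarrow> (x has_vector_derivative x' t) (at t within {a..b})"
    using C1_facts[OF xC ab(2)] unfolding x'_def by auto
  obtain Gx where Gx: "0 \<le> Gx" "\<And>\<tau>. \<tau> \<in> {a..b} \<Longrightarrow> \<bar>x' \<tau>\<bar> \<le> Gx" using cont_bound[OF x'c] by blast
  obtain X where X: "0 \<le> X" "\<And>\<tau>. \<tau> \<in> {a..b} \<Longrightarrow> \<bar>x \<tau>\<bar> \<le> X" using cont_bound[OF xc] by blast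
  define cr where "cr = rho powr alpha / Gamma (1 - alpha)"
  have cr: "0 < cr" unfolding cr_def using alpha rho by (auto intro!: Gamma_real_pos divide_pos_pos)
  have \<psi>eq: "\<psi> t = cr * Iop alpha rho x' a t" for t unfolding \<psi>_def caputo_eq cr_def x'_def ..
  have \<psi>c: "continuous_on {a..b} \<psi>"
    unfolding \<psi>eq using Iop_cont[of a b alpha rho x'] ab alpha rho x'c by (intro continuous_intros) auto
  define M where "M = mlo a b rho rho powr (- alpha) * ((b - a) powr (1 - alpha) / (1 - alpha))"
  have M0: "0 \<le> M" unfolding M_def using alpha by simp
  define Z\<psi> where "Z\<psi> = cr * (Gx * M)"
  have \<psi>b: "\<bar>\<psi> t\<bar> \<le> Z\<psi>" if "t \<in> {a..b}" for t
  proof -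
    have "\<bar>Iop alpha rho x' a t\<bar> \<le> Gx * M"
      using Iop_bound_uniform[of a t b alpha rho rho rho x' Gx] that ab alpha rho x'c Gx unfolding M_def by (auto simp: mult.assoc)
    then show ?thesis unfolding \<psi>eq Z\<psi>_def using cr by (simp add: abs_mult)
  qed
  have fKc: "continuous_on {a..b} fK"
    unfolding fK_def \<psi>_def[symmetric] by (rule L_comp_cont[OF L_d3_cont xc \<psi>c])
  have p2c: "continuous_on {a..b} (\<lambda>t. partial2 L t (x t) (\<psi> t))" by (rule L_comp_cont[OF L_d2_cont xc \<psi>c])
  have Kcont: "continuous_on {a..b} K"
    using Kd' by (auto simp: continuous_on_eq_continuous_within intro: differentiable_imp_continuous_within)
  have Keq: "kat_right a b alpha rho fK t = cr * vector_derivative K (at t within {a..b})" for t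
    unfolding kat_right_def K_def cr_def ..
  have vKc: "continuous_on {a..b} (\<lambda>t. vector_derivative K (at t within {a..b}))"
  proof -
    have "continuous_on {a..b} (\<lambda>t. kat_right a b alpha rho fK t / cr)" by (intro continuous_intros Kc') (use cr in simp)
    moreover have "(\<lambda>t. kat_right a b alpha rho fK t / cr) = (\<lambda>t. vector_derivative K (at t within {a..b}))"
      using cr by (simp add: Keq)
    ultimately show ?thesis by (simp only:)
  qed
  define h where "h t = partial2 L t (x t) (\<psi> t) - kat_right a b alpha rho fK t" for t
  have hc: "continuous_on {a..b} h" unfolding h_def by (intro continuous_intros p2c Kc')
  obtain \<delta> where \<delta>: "\<delta> > 0" "\<And>y. C1_on a b y \<Longrightarrow> y a = x a \<Longrightarrow> y b = x b \<Longrightarrow>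
         (\<forall>t\<in>{a..b}. \<bar>y t - x t\<bar> < \<delta> \<and> \<bar>dC1 a b y t - dC1 a b x t\<bar> < \<delta>) \<Longrightarrow>
         Jfun a b alpha L x rho \<le> Jfun a b alpha L y rho"
    using min by blast
  have main: "integral {a..b} (\<lambda>t. h t * eta c d t) = 0" if cd: "0 < d" "a \<le> c - d" "c + d \<le> b" for c d
  proof -
    define \<eta> where "\<eta> = eta c d"
    define \<eta>' where "\<eta>' = eta' c d"
    have d\<eta>: "\<And>t. (\<eta> has_real_derivative \<eta>' t) (at t)" unfolding \<eta>_def \<eta>'_def by (rule eta_deriv)
    have \<eta>'c: "continuous_on {a..b} \<eta>'" unfolding \<eta>'_def by (rule eta'_cont)
    have \<eta>c: "continuous_on {a..b} \<eta>" unfolding \<eta>_def by (rule eta_cont)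
    have \<eta>a: "\<eta> a = 0" unfolding \<eta>_def using cd by (intro eta_zero) auto
    have \<eta>b: "\<eta> b = 0" unfolding \<eta>_def using cd by (intro eta_zero) auto
    have \<eta>B: "\<bar>\<eta> t\<bar> \<le> d^4" for t unfolding \<eta>_def using cd by (intro eta_bound) auto
    have \<eta>'B: "\<bar>\<eta>' t\<bar> \<le> 4 * d^3" for t unfolding \<eta>'_def using cd by (intro eta'_bound) auto
    define \<phi> where "\<phi> t = cr * Iop alpha rho \<eta>' a t" for t
    have \<phi>c: "continuous_on {a..b} \<phi>"
      unfolding \<phi>_def using Iop_cont[of a b alpha rho \<eta>'] ab alpha rho \<eta>'c by (intro continuous_intros) auto
    define Z\<phi> where "Z\<phi> = cr * (4 * d^3 * M)"
    have \<phi>b: "\<bar>\<phi> t\<bar> \<le> Z\<phi>" if "t \<in> {a..b}" for t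
    proof -
      have "\<bar>Iop alpha rho \<eta>' a t\<bar> \<le> 4 * d^3 * M"
        using Iop_bound_uniform[of a t b alpha rho rho rho \<eta>' "4 * d^3"] that ab alpha rho \<eta>'c \<eta>'B cd
        unfolding M_def by (auto simp: mult.assoc)
      then show ?thesis unfolding \<phi>_def Z\<phi>_def using cr by (simp add: abs_mult)
    qed
    have kkx: "(\<lambda>\<tau>. kk alpha rho t \<tau> * x' \<tau>) integrable_on {a..t}" if "t \<in> {a..b}" for t
      using kk_int(1)[of a t b alpha rho rho rho x' Gx] that ab alpha rho x'c Gx
      by (auto simp: absolutely_integrable_on_def)
    have kk\<eta>: "(\<lambda>\<tau>. kk alpha rho t \<tau> * \<eta>' \<tau>) integrable_on {a..t}" if "t \<in> {a..b}" for t
      using kk_int(1)[of a t b alpha rho rho rho \<eta>' "4 * d^3"] that ab alpha rho \<eta>'c \<eta>'B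
      by (auto simp: absolutely_integrable_on_def)
    define y where "y e t = x t + e * \<eta> t" for e t
    have yd: "(y e has_vector_derivative x' t + e * \<eta>' t) (at t within {a..b})" if "t \<in> {a..b}" for e t
    proof -
      have "(x has_real_derivative x' t) (at t within {a..b})"
        using xd[OF that] by (simp add: has_real_derivative_iff_has_vector_derivative)
      moreover have "(\<eta> has_real_derivative \<eta>' t) (at t within {a..b})"
        by (rule has_field_derivative_at_within[OF d\<eta>])
      ultimately have "(y e has_real_derivative x' t + e * \<eta>' t) (at t within {a..b})"
        unfolding y_def by (intro DERIV_add DERIV_cmult)
      then show ?thesis by (simp add: has_real_derivative_iff_has_vector_derivative)
    qed
    have yC: "C1_on a b (y e)" for e
      unfolding C1_on_def using yd x'c \<eta>'c by (intro exI[of _ "\<lambda>t. x' t + e * \<eta>' t"]) (auto intro!: continuous_intros)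
    have dCy: "dC1 a b (y e) t = x' t + e * \<eta>' t" if "t \<in> {a..b}" for e t
      unfolding dC1_def using vector_derivative_within_cbox[of a b t "y e" "x' t + e * \<eta>' t"] yd[OF that] that ab
      by (simp add: cbox_interval)
    have capy: "caputo_kat a b alpha rho (y e) t = \<psi> t + e * \<phi> t" if "t \<in> {a..b}" for e t
    proof -
      have "Iop alpha rho (dC1 a b (y e)) a t = Iop alpha rho (\<lambda>\<tau>. x' \<tau> + e * \<eta>' \<tau>) a t"
        using that by (intro Iop_cong) (auto simp: dCy)
      also have "\<dots> = Iop alpha rho x' a t + e * Iop alpha rho \<eta>' a t"
        by (rule Iop_lin[OF kkx[OF that] kk\<eta>[OF that]])
      finally show ?thesis unfolding caputo_eq \<psi>eq \<phi>_def cr_def by (simp add: algebra_simps)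
    qed
    define J where "J e = integral {a..b} (\<lambda>t. L t (x t + e * \<eta> t) (\<psi> t + e * \<phi> t))" for e
    have Jy: "Jfun a b alpha L (y e) rho = J e" for e
      unfolding Jfun_def J_def by (intro integral_cong) (simp add: capy y_def)
    have J0: "J 0 = Jfun a b alpha L x rho" unfolding J_def Jfun_def \<psi>_def by simp
    define S where "S = d^4 + 4 * d^3 + 1"
    have d34: "0 \<le> d^4" "0 \<le> d^3" using cd by simp_all
    have S: "0 < S" "d^4 \<le> S" "4 * d^3 \<le> S" unfolding S_def using d34 by linarith+
    have evmin: "\<forall>\<^sub>F e in at 0. J 0 \<le> J e"
    proof -
      have "\<forall>\<^sub>F e in at (0::real). \<bar>e\<bar> < \<delta> / S"
        unfolding eventually_at by (rule exI[of _ "\<delta> / S"]) (use \<delta> S in \<open>auto simp: dist_real_def\<close>)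
      then show ?thesis
      proof eventually_elim
        case (elim e)
        have eS: "\<bar>e\<bar> * S < \<delta>" using elim S by (simp add: field_simps)
        have "\<bar>y e t - x t\<bar> < \<delta> \<and> \<bar>dC1 a b (y e) t - dC1 a b x t\<bar> < \<delta>" if "t \<in> {a..b}" for t
        proof
          have "\<bar>y e t - x t\<bar> = \<bar>e\<bar> * \<bar>\<eta> t\<bar>" unfolding y_def by (simp add: abs_mult)
          also have "\<dots> \<le> \<bar>e\<bar> * S" using \<eta>B[of t] S by (intro mult_left_mono) auto
          finally show "\<bar>y e t - x t\<bar> < \<delta>" using eS by linarith
          have "\<bar>dC1 a b (y e) t - dC1 a b x t\<bar> = \<bar>e\<bar> * \<bar>\<eta>' t\<bar>"
            using dCy[OF that] unfolding x'_def by (simp add: abs_mult)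
          also have "\<dots> \<le> \<bar>e\<bar> * S" using \<eta>'B[of t] S by (intro mult_left_mono) auto
          finally show "\<bar>dC1 a b (y e) t - dC1 a b x t\<bar> < \<delta>" using eS by linarith
        qed
        moreover have "y e a = x a" "y e b = x b" unfolding y_def using \<eta>a \<eta>b by auto
        ultimately have "Jfun a b alpha L x rho \<le> Jfun a b alpha L (y e) rho"
          using \<delta>(2)[OF yC] by blast
        then show ?case using Jy J0 by simp
      qed
    qed
    define X' where "X' = X + d^4"
    define Z' where "Z' = Z\<psi> + Z\<phi>"
    obtain P2 where P2: "0 \<le> P2" "\<And>t y z. t \<in> {a..b} \<Longrightarrow> \<bar>y\<bar> \<le> X' \<Longrightarrow> \<bar>z\<bar> \<le> Z' \<Longrightarrow> \<bar>partial2 L t y z\<bar> \<le> P2"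
      using cont_bound3[OF L_d2_cont] by blast
    obtain P3 where P3: "0 \<le> P3" "\<And>t y z. t \<in> {a..b} \<Longrightarrow> \<bar>y\<bar> \<le> X' \<Longrightarrow> \<bar>z\<bar> \<le> Z' \<Longrightarrow> \<bar>partial3 L t y z\<bar> \<le> P3"
      using cont_bound3[OF L_d3_cont] by blast
    define Q where "Q e t = (L t (x t + e * \<eta> t) (\<psi> t + e * \<phi> t) - L t (x t) (\<psi> t)) / e" for e t
    have Qb: "\<bar>Q e t\<bar> \<le> P2 * d^4 + P3 * Z\<phi>" if "t \<in> {a..b}" "e \<noteq> 0" "\<bar>e\<bar> \<le> 1" for e t
    proof -
      have \<eta>e: "\<bar>e * \<eta> t\<bar> \<le> d^4"
      proof -
        have "\<bar>e * \<eta> t\<bar> = \<bar>e\<bar> * \<bar>\<eta> t\<bar>" by (simp add: abs_mult)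
        also have "\<dots> \<le> 1 * d^4" using \<eta>B[of t] that by (intro mult_mono) auto
        finally show ?thesis by simp
      qed
      have \<phi>e: "\<bar>e * \<phi> t\<bar> \<le> Z\<phi>"
      proof -
        have "\<bar>e * \<phi> t\<bar> = \<bar>e\<bar> * \<bar>\<phi> t\<bar>" by (simp add: abs_mult)
        also have "\<dots> \<le> 1 * Z\<phi>" using \<phi>b[OF that(1)] that by (intro mult_mono) auto
        finally show ?thesis by simp
      qed
      have xb1: "\<bar>x t + e * \<eta> t\<bar> \<le> X'" using X(2)[OF that(1)] \<eta>e unfolding X'_def by linarith
      have xb0: "\<bar>x t\<bar> \<le> X'" using X(2)[OF that(1)] d34 unfolding X'_def by linarith
      have zb1: "\<bar>\<psi> t + e * \<phi> t\<bar> \<le> Z'" using \<psi>b[OF that(1)] \<phi>e unfolding Z'_def by linarith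
      have zb0: "\<bar>\<psi> t\<bar> \<le> Z'" using \<psi>b[OF that(1)] \<phi>b[OF that(1)] unfolding Z'_def by linarith
      have A: "\<bar>L t (x t + e * \<eta> t) (\<psi> t + e * \<phi> t) - L t (x t) (\<psi> t + e * \<phi> t)\<bar> \<le> P2 * \<bar>e * \<eta> t\<bar>"
        using L_lip_y[of L t "\<psi> t + e * \<phi> t" X' P2 "x t + e * \<eta> t" "x t"] L_d2[OF that(1)] P2(2)[OF that(1) _ zb1] xb1 xb0
        by simp
      have B: "\<bar>L t (x t) (\<psi> t + e * \<phi> t) - L t (x t) (\<psi> t)\<bar> \<le> P3 * \<bar>e * \<phi> t\<bar>"
        using L_lip_z[of L t "x t" Z' P3 "\<psi> t + e * \<phi> t" "\<psi> t"] L_d3[OF that(1)] P3(2)[OF that(1) xb0] zb1 zb0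
        by simp
      have "\<bar>L t (x t + e * \<eta> t) (\<psi> t + e * \<phi> t) - L t (x t) (\<psi> t)\<bar> \<le> P2 * \<bar>e * \<eta> t\<bar> + P3 * \<bar>e * \<phi> t\<bar>"
        using A B by linarith
      also have "\<dots> = \<bar>e\<bar> * (P2 * \<bar>\<eta> t\<bar> + P3 * \<bar>\<phi> t\<bar>)" by (simp add: abs_mult algebra_simps)
      also have "\<dots> \<le> \<bar>e\<bar> * (P2 * d^4 + P3 * Z\<phi>)"
        using \<eta>B[of t] \<phi>b[OF that(1)] P2(1) P3(1) by (intro mult_left_mono add_mono) auto
      finally show ?thesis unfolding Q_def using that by (simp add: abs_divide divide_simps mult.commute)
    qed
    have Lc: "continuous_on {a..b} (\<lambda>t. L t (x t + e * \<eta> t) (\<psi> t + e * \<phi> t))" for e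
      by (rule L_comp_cont[OF L_cont]) (intro continuous_intros xc \<eta>c \<psi>c \<phi>c)+
    have Qint: "Q e integrable_on {a..b} \<and> integral {a..b} (Q e) = (J e - J 0) / (e - 0)" for e
    proof -
      have eq: "Q e = (\<lambda>t. (L t (x t + e * \<eta> t) (\<psi> t + e * \<phi> t) - L t (x t + 0 * \<eta> t) (\<psi> t + 0 * \<phi> t)) * inverse e)"
        unfolding Q_def by (simp add: divide_inverse)
      have i1: "(\<lambda>t. L t (x t + e * \<eta> t) (\<psi> t + e * \<phi> t)) integrable_on {a..b}"
        using Lc by (rule integrable_continuous_interval)
      have i0: "(\<lambda>t. L t (x t + 0 * \<eta> t) (\<psi> t + 0 * \<phi> t)) integrable_on {a..b}"
        using Lc by (rule integrable_continuous_interval)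
      have "Q e integrable_on {a..b}" unfolding eq
        using integrable_on_cmult_right[OF integrable_diff[OF i1 i0], of "inverse e"] by simp
      moreover have "integral {a..b} (Q e) = (J e - J 0) / (e - 0)"
        unfolding eq J_def using integral_diff[OF i1 i0] by (simp add: divide_inverse)
      ultimately show ?thesis by simp
    qed
    have lim: "((\<lambda>e. Q e t) \<longlongrightarrow> partial2 L t (x t) (\<psi> t) * \<eta> t + partial3 L t (x t) (\<psi> t) * \<phi> t) (at 0)"
      if t: "t \<in> {a..b}" for t
    proof -
      have A: "((\<lambda>e. (L t (x t + e * \<eta> t) (\<psi> t + e * \<phi> t) - L t (x t) (\<psi> t + e * \<phi> t)) / e)
          \<longlongrightarrow> partial2 L t (x t) (\<psi> t) * \<eta> t) (at 0)"
      proof (rule partial_limit[of "\<lambda>u z. L t u z" "\<lambda>u z. partial2 L t u z" "x t" "\<psi> t" "\<lambda>e. \<psi> t + e * \<phi> t" "\<eta> t"])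
        fix u z
        show "((\<lambda>u. L t u z) has_real_derivative partial2 L t u z) (at u)"
          unfolding partial2_def using L_d2[OF t] by (simp add: DERIV_deriv_iff_real_differentiable)
      next
        fix e :: real assume "e > 0"
        from cont_point_dist[OF L_d2_cont t this, of "x t" "\<psi> t"]
        show "\<exists>k>0. \<forall>u z. \<bar>u - x t\<bar> < k \<and> \<bar>z - \<psi> t\<bar> < k \<longrightarrow> \<bar>partial2 L t u z - partial2 L t (x t) (\<psi> t)\<bar> < e"
          by simp
      next
        have "((\<lambda>e. \<psi> t + e * \<phi> t) \<longlongrightarrow> \<psi> t + 0 * \<phi> t) (at 0)" by (intro tendsto_intros)
        then show "((\<lambda>e. \<psi> t + e * \<phi> t) \<longlongrightarrow> \<psi> t) (at 0)" by simp
      qed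
      have dL: "((\<lambda>z. L t (x t) z) has_real_derivative partial3 L t (x t) (\<psi> t + 0 * \<phi> t)) (at (\<psi> t + 0 * \<phi> t))"
        unfolding partial3_def using L_d3[OF t] by (simp add: DERIV_deriv_iff_real_differentiable)
      have di: "((\<lambda>e. \<psi> t + e * \<phi> t) has_real_derivative \<phi> t) (at 0)"
        by (auto intro!: derivative_eq_intros)
      have "((\<lambda>e. L t (x t) (\<psi> t + e * \<phi> t)) has_real_derivative partial3 L t (x t) (\<psi> t + 0 * \<phi> t) * \<phi> t) (at 0)"
        using DERIV_chain2[OF dL di] .
      then have B: "((\<lambda>e. (L t (x t) (\<psi> t + e * \<phi> t) - L t (x t) (\<psi> t)) / e)
          \<longlongrightarrow> partial3 L t (x t) (\<psi> t) * \<phi> t) (at 0)"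
        by (simp add: has_field_derivative_iff)
      have "(\<lambda>e. Q e t) = (\<lambda>e. (L t (x t + e * \<eta> t) (\<psi> t + e * \<phi> t) - L t (x t) (\<psi> t + e * \<phi> t)) / e
          + (L t (x t) (\<psi> t + e * \<phi> t) - L t (x t) (\<psi> t)) / e)"
        unfolding Q_def by (rule ext) (simp add: diff_divide_distrib)
      then show ?thesis using tendsto_add[OF A B] by simp
    qed
    have ev: "\<forall>\<^sub>F e in at 0. Q e integrable_on {a..b} \<and> (\<forall>t\<in>{a..b}. \<bar>Q e t\<bar> \<le> P2 * d^4 + P3 * Z\<phi>)"
    proof -
      have "\<forall>\<^sub>F e in at (0::real). e \<noteq> 0 \<and> \<bar>e\<bar> \<le> 1"
        unfolding eventually_at by (rule exI[of _ 1]) (auto simp: dist_real_def)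
      then show ?thesis by eventually_elim (use Qint Qb in auto)
    qed
    have hint: "(\<lambda>t. P2 * d^4 + P3 * Z\<phi>) integrable_on {a..b}"
      by (rule integrable_continuous_interval) (rule continuous_on_const)
    have l1: "((\<lambda>e. integral {a..b} (Q e)) \<longlongrightarrow>
        integral {a..b} (\<lambda>t. partial2 L t (x t) (\<psi> t) * \<eta> t + partial3 L t (x t) (\<psi> t) * \<phi> t)) (at 0)"
      by (rule dct_filter[OF ev hint lim])
    have l2: "((\<lambda>e. (J e - J 0) / (e - 0)) \<longlongrightarrow>
        integral {a..b} (\<lambda>t. partial2 L t (x t) (\<psi> t) * \<eta> t + partial3 L t (x t) (\<psi> t) * \<phi> t)) (at 0)"
      using l1 Qint by simp
    have I0: "integral {a..b} (\<lambda>t. partial2 L t (x t) (\<psi> t) * \<eta> t + partial3 L t (x t) (\<psi> t) * \<phi> t) = 0"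
      by (rule min_deriv_zero[OF l2 evmin])
    have i2: "(\<lambda>t. partial2 L t (x t) (\<psi> t) * \<eta> t) integrable_on {a..b}"
      by (intro integrable_continuous_interval continuous_intros p2c \<eta>c)
    have fKeq: "fK t = partial3 L t (x t) (\<psi> t)" for t unfolding fK_def \<psi>_def ..
    have i3: "(\<lambda>t. partial3 L t (x t) (\<psi> t) * \<phi> t) integrable_on {a..b}"
      unfolding fKeq[symmetric] by (intro integrable_continuous_interval continuous_intros fKc \<phi>c)
    have I1: "integral {a..b} (\<lambda>t. partial2 L t (x t) (\<psi> t) * \<eta> t) + integral {a..b} (\<lambda>t. partial3 L t (x t) (\<psi> t) * \<phi> t) = 0"
      using I0 integral_add[OF i2 i3] by simp
    have "integral {a..b} (\<lambda>t. partial3 L t (x t) (\<psi> t) * \<phi> t) = cr * integral {a..b} (\<lambda>t. fK t * Iop alpha rho \<eta>' a t)"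
      unfolding \<phi>_def fKeq[symmetric] by (simp add: mult.left_commute)
    also have "integral {a..b} (\<lambda>t. fK t * Iop alpha rho \<eta>' a t) = integral {a..b} (\<lambda>\<tau>. \<eta>' \<tau> * K \<tau>)"
      unfolding K_def using ab alpha rho fKc \<eta>'c Kcont[unfolded K_def] by (intro fubini_kat) auto
    also have "\<dots> = - integral {a..b} (\<lambda>t. \<eta> t * vector_derivative K (at t within {a..b}))"
      using ab by (intro ibp d\<eta> \<eta>'c \<eta>a \<eta>b Kd' vKc) auto
    finally have "integral {a..b} (\<lambda>t. partial3 L t (x t) (\<psi> t) * \<phi> t)
        = - integral {a..b} (\<lambda>t. \<eta> t * kat_right a b alpha rho fK t)"
      unfolding Keq by (simp add: mult.left_commute)
    with I1 have I2: "integral {a..b} (\<lambda>t. partial2 L t (x t) (\<psi> t) * \<eta> t) - integral {a..b} (\<lambda>t. \<eta> t * kat_right a b alpha rho fK t) = 0"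
      by simp
    have i4: "(\<lambda>t. \<eta> t * kat_right a b alpha rho fK t) integrable_on {a..b}"
      by (intro integrable_continuous_interval continuous_intros Kc' \<eta>c)
    have "integral {a..b} (\<lambda>t. h t * eta c d t) = integral {a..b} (\<lambda>t. partial2 L t (x t) (\<psi> t) * \<eta> t - \<eta> t * kat_right a b alpha rho fK t)"
      unfolding h_def \<eta>_def by (simp add: algebra_simps)
    also have "\<dots> = 0" using I2 integral_diff[OF i2 i4] by simp
    finally show ?thesis .
  qed
  have "\<forall>t\<in>{a..b}. h t = 0" by (rule fund_lemma[OF ab(2) hc main])
  then show ?thesis unfolding h_def \<psi>_def fK_def .
qed

theorem mainTheorem6:
  fixes a b alpha xa xb rho :: real
    and L :: "real \<Rightarrow> real \<Rightarrow> real \<Rightarrow> real"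
    and x :: "real \<Rightarrow> real"
  assumes ab: "0 < a" "a < b"
    and alpha: "0 < alpha" "alpha < 1"
    and L_cont: "continuous_on ({a..b} \<times> UNIV) (\<lambda>(t, y, z). L t y z)"
    and L_d2: "\<And>t y z. t \<in> {a..b} \<Longrightarrow> (\<lambda>y'. L t y' z) differentiable (at y)"
    and L_d3: "\<And>t y z. t \<in> {a..b} \<Longrightarrow> (\<lambda>z'. L t y z') differentiable (at z)"
    and L_d2_cont: "continuous_on ({a..b} \<times> UNIV) (\<lambda>(t, y, z). partial2 L t y z)"
    and L_d3_cont: "continuous_on ({a..b} \<times> UNIV) (\<lambda>(t, y, z). partial3 L t y z)"
    and right_reg: "\<And>r y. 0 < r \<Longrightarrow> C1_on a b y \<Longrightarrow>
         (\<forall>t\<in>{a..b}. kat_right_int b alpha r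
              (\<lambda>s. partial3 L s (y s) (caputo_kat a b alpha r y s)) differentiable (at t within {a..b}))
         \<and> continuous_on {a..b}
             (kat_right a b alpha r (\<lambda>s. partial3 L s (y s) (caputo_kat a b alpha r y s)))"
    and xU: "C1_on a b x" "x a = xa" "x b = xb"
    and rho: "0 < rho"
    and locmin: "\<exists>\<delta>>0. \<forall>y r. C1_on a b y \<and> y a = xa \<and> y b = xb \<and> 0 < r
         \<and> (\<forall>t\<in>{a..b}. \<bar>y t - x t\<bar> < \<delta> \<and> \<bar>dC1 a b y t - dC1 a b x t\<bar> < \<delta>)
         \<and> \<bar>r - rho\<bar> < \<delta>
         \<longrightarrow> Jfun a b alpha L x rho \<le> Jfun a b alpha L y r"
  shows "(\<forall>t\<in>{a..b}.
           partial2 L t (x t) (caputo_kat a b alpha rho x t)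
           - kat_right a b alpha rho (\<lambda>s. partial3 L s (x s) (caputo_kat a b alpha rho x s)) t = 0)
         \<and> integral {a..b}
           (\<lambda>t. partial3 L t (x t) (caputo_kat a b alpha rho x t)
                * deriv (\<lambda>r. caputo_kat a b alpha r x t) rho) = 0"
proof -
  obtain \<delta> where \<delta>: "\<delta> > 0" and D: "\<And>y r. C1_on a b y \<and> y a = xa \<and> y b = xb \<and> 0 < r
         \<and> (\<forall>t\<in>{a..b}. \<bar>y t - x t\<bar> < \<delta> \<and> \<bar>dC1 a b y t - dC1 a b x t\<bar> < \<delta>)
         \<and> \<bar>r - rho\<bar> < \<delta>
         \<Longrightarrow> Jfun a b alpha L x rho \<le> Jfun a b alpha L y r"
    using locmin by blast
  have min1: "\<exists>\<delta>>0. \<forall>y. C1_on a b y \<and> y a = x a \<and> y b = x b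
         \<and> (\<forall>t\<in>{a..b}. \<bar>y t - x t\<bar> < \<delta> \<and> \<bar>dC1 a b y t - dC1 a b x t\<bar> < \<delta>)
         \<longrightarrow> Jfun a b alpha L x rho \<le> Jfun a b alpha L y rho"
    using \<delta> D[where r=rho] xU rho by auto
  have min2: "\<exists>\<delta>>0. \<forall>r. 0 < r \<and> \<bar>r - rho\<bar> < \<delta> \<longrightarrow> Jfun a b alpha L x rho \<le> Jfun a b alpha L x r"
    using \<delta> D[where y=x] xU by auto
  have rr: "(\<forall>t\<in>{a..b}. kat_right_int b alpha rho
              (\<lambda>s. partial3 L s (x s) (caputo_kat a b alpha rho x s)) differentiable (at t within {a..b}))
         \<and> continuous_on {a..b}
             (kat_right a b alpha rho (\<lambda>s. partial3 L s (x s) (caputo_kat a b alpha rho x s)))"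
    by (rule right_reg[OF rho xU(1)])
  have P1: "\<forall>t\<in>{a..b}. partial2 L t (x t) (caputo_kat a b alpha rho x t)
           - kat_right a b alpha rho (\<lambda>s. partial3 L s (x s) (caputo_kat a b alpha rho x s)) t = 0"
    by (rule part1[OF ab alpha L_cont L_d2 L_d3 L_d2_cont L_d3_cont conjunct1[OF rr] conjunct2[OF rr] xU(1) rho min1])
  have P2: "integral {a..b}
           (\<lambda>t. partial3 L t (x t) (caputo_kat a b alpha rho x t)
                * deriv (\<lambda>r. caputo_kat a b alpha r x t) rho) = 0"
    by (rule part2[OF ab alpha L_cont L_d3 L_d3_cont xU(1) rho min2])
  show ?thesis using P1 P2 by blast
qed

end
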